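(* Let $d\ge1$, $f\in\tilde{\mathcal A}_+(d)$, and let $\{\psi_\delta\}_{\delta>0}$ be a family of nonnegative, radial, smooth functions on $\mathbb{R}^d$ with $\operatorname{supp}(\psi_\delta)\subseteq B^d_\delta$ and $\|\psi_\delta\|_{L^1}=1$. Set $\varphi_\delta:=\psi_\delta*\psi_\delta$, $g:=f*\varphi_\delta$, and $h:=\widehat g*\varphi_\delta+g\,\widehat{\varphi_\delta}$. Then for every $\varepsilon>0$ there exists $\delta>0$ such that: (a) $h\in\mathcal S(\mathbb{R}^d)$, $\widehat h=h$, and $h(0)<0$; (b) $r(h)\le r(f)+\varepsilon$.
   Context: Fourier transform: $\widehat f(\xi)=\int_{\mathbb{R}^d} f(x)e^{-2\pi i\langle x,\xi\rangle}\,dx$. $r(f):=\inf\{r>0: f(x)\ge 0 \text{ for all } |x|\ge r\}$. $\mathcal A_+(d)$ is the set of $f:\mathbb{R}^d\to\mathbb{R}$ with $f,\widehat f\in L^1(\mathbb{R}^d)$, $\widehat f$ real-valued, $f$ eventually nonnegative (i.e. $\ge0$ for all large $|x|$) with $\widehat f(0)\le0$, and $\widehat f$ eventually nonnegative with $f(0)\le0$. $\tilde{\mathcal A}_+(d):=\{f\in\mathcal A_+(d):\widehat f=f,\ f(0)<0\}$. $B^d_\delta$ is the open ball of radius $\delta$ centered at the origin; $\mathcal S$ is the Schwartz class. *)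

theory Defs
  imports "HOL-Analysis.Analysis"
begin

text \<open>Euclidean space R^d is modelled as real^'n for a finite index type 'n (d = CARD('n) \<ge> 1).\<close>

definition fourier :: "(real^'n::finite \<Rightarrow> complex) \<Rightarrow> real^'n \<Rightarrow> complex" where
  "fourier f \<xi> = (\<integral>x. f x * cis (- 2 * pi * (x \<bullet> \<xi>)) \<partial>lebesgue)"

abbreviation fourierR :: "(real^'n::finite \<Rightarrow> real) \<Rightarrow> real^'n \<Rightarrow> complex" where
  "fourierR f \<equiv> fourier (\<lambda>x. complex_of_real (f x))"

definition conv :: "(real^'n::finite \<Rightarrow> complex) \<Rightarrow> (real^'n \<Rightarrow> complex) \<Rightarrow> real^'n \<Rightarrow> complex" where
  "conv f g x = (\<integral>y. f y * g (x - y) \<partial>lebesgue)"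

definition eventually_nonneg :: "(real^'n::finite \<Rightarrow> real) \<Rightarrow> bool" where
  "eventually_nonneg f \<longleftrightarrow> (\<exists>R. \<forall>x. norm x \<ge> R \<longrightarrow> f x \<ge> 0)"

definition rad :: "(real^'n::finite \<Rightarrow> real) \<Rightarrow> real" where
  "rad f = Inf {r. r > 0 \<and> (\<forall>x. norm x \<ge> r \<longrightarrow> f x \<ge> 0)}"

definition A_plus :: "(real^'n::finite \<Rightarrow> real) set" where
  "A_plus = {f. integrable lebesgue f \<and> integrable lebesgue (fourierR f)
      \<and> (\<forall>\<xi>. Im (fourierR f \<xi>) = 0)
      \<and> eventually_nonneg f \<and> Re (fourierR f 0) \<le> 0
      \<and> eventually_nonneg (\<lambda>\<xi>. Re (fourierR f \<xi>)) \<and> f 0 \<le> 0}"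

definition A_tilde :: "(real^'n::finite \<Rightarrow> real) set" where
  "A_tilde = {f \<in> A_plus. (\<forall>\<xi>. fourierR f \<xi> = complex_of_real (f \<xi>)) \<and> f 0 < 0}"

text \<open>A family D of all iterated partial derivatives: D [] = f and D (i # \<alpha>) is the
  partial derivative in direction i of D \<alpha>; every D \<alpha> is (Frechet) differentiable everywhere.\<close>
definition partials_family :: "(real^'n::finite \<Rightarrow> 'b::real_normed_vector) \<Rightarrow> ('n list \<Rightarrow> real^'n \<Rightarrow> 'b) \<Rightarrow> bool" where
  "partials_family f D \<longleftrightarrow> D [] = f \<and>
     (\<forall>\<alpha> x. (D \<alpha> has_derivative (\<lambda>v. \<Sum>i\<in>UNIV. (v $ i) *\<^sub>R D (i # \<alpha>) x)) (at x))"

definition smooth_fun :: "(real^'n::finite \<Rightarrow> 'b::real_normed_vector) \<Rightarrow> bool" where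
  "smooth_fun f \<longleftrightarrow> (\<exists>D. partials_family f D)"

definition schwartz :: "(real^'n::finite \<Rightarrow> 'b::real_normed_vector) \<Rightarrow> bool" where
  "schwartz f \<longleftrightarrow> (\<exists>D. partials_family f D \<and>
     (\<forall>\<alpha> (k::nat). \<exists>C. \<forall>x. (1 + norm x) ^ k * norm (D \<alpha> x) \<le> C))"

end

theory Submission
  imports Defs
begin

type_synonym 'n vec = "real^'n"

lemma cont_borel: "continuous_on UNIV (F::'a::euclidean_space \<Rightarrow> 'b::euclidean_space) \<Longrightarrow> F \<in> borel_measurable borel"
  by (rule borel_measurable_continuous_onI)

lemma int_leb_borel:
  fixes F :: "'a::euclidean_space \<Rightarrow> 'b::{banach,second_countable_topology}"
  assumes "F \<in> borel_measurable borel"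
  shows "integral\<^sup>L lebesgue F = integral\<^sup>L lborel F" "integrable lebesgue F \<longleftrightarrow> integrable lborel F"
  using assms by (simp_all add: integral_completion integrable_completion measurable_lborel1)

lemma lborel_transl:
  fixes F :: "'a::euclidean_space \<Rightarrow> 'b::{banach,second_countable_topology}"
  assumes [measurable]: "F \<in> borel_measurable borel"
  shows "(\<integral>x. F (c + x) \<partial>lborel) = (\<integral>x. F x \<partial>lborel)"
    "integrable lborel (\<lambda>x. F (c + x)) \<longleftrightarrow> integrable lborel F"
proof -
  have "(\<integral>x. F x \<partial>lborel) = (\<integral>x. F x \<partial>distr lborel borel ((+) c))" by (simp add: lborel_distr_plus)
  also have "\<dots> = (\<integral>x. F (c + x) \<partial>lborel)" by (rule integral_distr) auto
  finally show "(\<integral>x. F (c + x) \<partial>lborel) = (\<integral>x. F x \<partial>lborel)" ..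
  have "integrable lborel F \<longleftrightarrow> integrable (distr lborel borel ((+) c)) F" by (simp add: lborel_distr_plus)
  also have "\<dots> \<longleftrightarrow> integrable lborel (\<lambda>x. F (c + x))" by (rule integrable_distr_eq) auto
  finally show "integrable lborel (\<lambda>x. F (c + x)) \<longleftrightarrow> integrable lborel F" ..
qed

lemma lborel_refl:
  fixes F :: "'a::euclidean_space \<Rightarrow> 'b::{banach,second_countable_topology}"
  assumes [measurable]: "F \<in> borel_measurable borel"
  shows "(\<integral>x. F (- x) \<partial>lborel) = (\<integral>x. F x \<partial>lborel)"
    "integrable lborel (\<lambda>x. F (- x)) \<longleftrightarrow> integrable lborel F"
proof -
  have eq: "lborel = distr lborel borel (uminus :: 'a \<Rightarrow> 'a)"
    using lborel_affine[of "-1" "0::'a"] by (simp add: density_1)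
  have "(\<integral>x. F x \<partial>lborel) = (\<integral>x. F x \<partial>distr lborel borel uminus)" by (subst eq) simp
  also have "\<dots> = (\<integral>x. F (- x) \<partial>lborel)" by (rule integral_distr) auto
  finally show "(\<integral>x. F (- x) \<partial>lborel) = (\<integral>x. F x \<partial>lborel)" ..
  have "integrable lborel F \<longleftrightarrow> integrable (distr lborel borel uminus) F" by (subst eq) simp
  also have "\<dots> \<longleftrightarrow> integrable lborel (\<lambda>x. F (- x))" by (rule integrable_distr_eq) auto
  finally show "integrable lborel (\<lambda>x. F (- x)) \<longleftrightarrow> integrable lborel F" ..
qed

lemma lborel_flip:
  fixes F :: "'a::euclidean_space \<Rightarrow> 'b::{banach,second_countable_topology}"
  assumes [measurable]: "F \<in> borel_measurable borel"
  shows "(\<integral>x. F (c - x) \<partial>lborel) = (\<integral>x. F x \<partial>lborel)"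
    "integrable lborel (\<lambda>x. F (c - x)) \<longleftrightarrow> integrable lborel F"
proof -
  have m: "(\<lambda>x. F (c + x)) \<in> borel_measurable borel" by measurable
  show "(\<integral>x. F (c - x) \<partial>lborel) = (\<integral>x. F x \<partial>lborel)"
    using lborel_refl(1)[OF m] lborel_transl(1)[OF assms, of c] by simp
  show "integrable lborel (\<lambda>x. F (c - x)) \<longleftrightarrow> integrable lborel F"
    using lborel_refl(2)[OF m] lborel_transl(2)[OF assms, of c] by simp
qed

lemma sum_axis_scaleR: "(\<Sum>j\<in>UNIV. (axis i (1::real) $ j) *\<^sub>R c j) = (c i :: 'b::real_vector)"
proof -
  have "(\<Sum>j\<in>UNIV. (axis i (1::real) $ j) *\<^sub>R c j) = (\<Sum>j\<in>UNIV. if j = i then c j else 0)"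
    by (rule sum.cong) (auto simp: axis_def)
  thus ?thesis by simp
qed

lemma pf_deriv: "partials_family u D \<Longrightarrow> (D \<alpha> has_derivative (\<lambda>v. \<Sum>i\<in>UNIV. (v $ i) *\<^sub>R D (i # \<alpha>) x)) (at x)"
  by (simp add: partials_family_def)

lemma pf_cont: assumes "partials_family u D" shows "continuous_on UNIV (D \<alpha>)"
proof (rule continuous_at_imp_continuous_on, intro ballI)
  fix x show "isCont (D \<alpha>) x" using pf_deriv[OF assms] by (rule has_derivative_continuous)
qed

lemma pf_shift: "partials_family u D \<Longrightarrow> partials_family (D \<beta>) (\<lambda>\<gamma>. D (\<gamma> @ \<beta>))"
  by (simp add: partials_family_def)

lemma pf_zero:
  assumes pf: "partials_family u D" and z: "\<And>x. R \<le> norm x \<Longrightarrow> u x = 0"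
  shows "R < norm x \<Longrightarrow> D \<alpha> x = 0"
proof (induction \<alpha> arbitrary: x)
  case Nil
  then show ?case using pf z by (simp add: partials_family_def)
next
  case (Cons i \<alpha>)
  have d1: "(D \<alpha> has_derivative (\<lambda>v. \<Sum>j\<in>UNIV. (v $ j) *\<^sub>R D (j # \<alpha>) x)) (at x)"
    using pf_deriv[OF pf] .
  have "((\<lambda>_. 0) has_derivative (\<lambda>v. 0)) (at x)" by simp
  hence d2: "(D \<alpha> has_derivative (\<lambda>v. 0)) (at x)"
    by (rule has_derivative_transform_within_open[where s="{y. R < norm y}"])
       (use Cons in \<open>auto intro: open_Collect_less continuous_intros\<close>)
  have "(\<lambda>v. \<Sum>j\<in>UNIV. (v $ j) *\<^sub>R D (j # \<alpha>) x) = (\<lambda>v. 0)"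
    by (rule has_derivative_unique[OF d1 d2])
  from fun_cong[OF this, of "axis i 1"] show ?case by (simp add: sum_axis_scaleR)
qed

lemma csupp_bounded:
  fixes v :: "'a::euclidean_space \<Rightarrow> 'b::real_normed_vector"
  assumes c: "continuous_on UNIV v" and z: "\<And>x. R < norm x \<Longrightarrow> v x = 0"
  shows "\<exists>B. \<forall>x. norm (v x) \<le> B"
proof -
  have "compact (v ` cball 0 R)"
    by (rule compact_continuous_image) (use c in \<open>auto intro: continuous_on_subset\<close>)
  then obtain B where B: "\<And>y. y \<in> v ` cball 0 R \<Longrightarrow> norm y \<le> B"
    using compact_imp_bounded bounded_iff by metis
  show ?thesis
  proof (intro exI allI)
    fix x show "norm (v x) \<le> max B 0"
      using B[of "v x"] z[of x] by (cases "norm x \<le> R") auto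
  qed
qed

lemma csupp_integrable:
  fixes v :: "'a::euclidean_space \<Rightarrow> 'b::{banach, second_countable_topology}"
  assumes c: "continuous_on UNIV v" and z: "\<And>x. R < norm x \<Longrightarrow> v x = 0"
  shows "integrable lborel v"
proof -
  have "integrable lborel (\<lambda>x. indicator (cball 0 R) x *\<^sub>R v x)"
    by (rule borel_integrable_compact) (use c in \<open>auto intro: continuous_on_subset\<close>)
  moreover have "(\<lambda>x. indicator (cball 0 R) x *\<^sub>R v x) = v"
    using z by (auto simp: indicator_def fun_eq_iff)
  ultimately show ?thesis by simp
qed

definition testf :: "('n::finite vec \<Rightarrow> complex) \<Rightarrow> bool" where
  "testf u \<longleftrightarrow> (\<exists>R. \<forall>x. R \<le> norm x \<longrightarrow> u x = 0) \<and> smooth_fun u"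

lemma testf_D:
  assumes "testf u"
  obtains D R where "partials_family u D" "\<And>\<alpha>. continuous_on UNIV (D \<alpha>)"
    "\<And>\<alpha> x. R < norm x \<Longrightarrow> D \<alpha> x = 0" "\<And>x. R \<le> norm x \<Longrightarrow> u x = 0"
proof -
  from assms obtain R D where z: "\<And>x. R \<le> norm x \<Longrightarrow> u x = 0" and pf: "partials_family u D"
    unfolding testf_def smooth_fun_def by blast
  show ?thesis by (rule that[OF pf pf_cont[OF pf] pf_zero[OF pf z] z])
qed

fun splits :: "'a list \<Rightarrow> ('a list \<times> 'a list) list" where
  "splits [] = [([],[])]"
| "splits (i#\<alpha>) = concat (map (\<lambda>(p,q). [(i#p,q),(p,i#q)]) (splits \<alpha>))"

lemma sum_list_splits_aux:
  "sum_list (map F (concat (map (\<lambda>(p,q). [(i#p,q),(p,i#q)]) xs))) =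
   sum_list (map (\<lambda>(p,q). F (i#p,q) + F (p,i#q)) xs)"
  by (induction xs) auto

lemma has_derivative_sum_list:
  assumes "\<And>p. p \<in> set xs \<Longrightarrow> ((F p) has_derivative (F' p)) (at x)"
  shows "((\<lambda>x. sum_list (map (\<lambda>p. F p x) xs)) has_derivative (\<lambda>v. sum_list (map (\<lambda>p. F' p v) xs))) (at x)"
  using assms by (induction xs) (auto intro!: derivative_eq_intros)

lemma sum_scaleR_sum_list:
  "(\<Sum>i\<in>UNIV. (v $ i) *\<^sub>R sum_list (map (G i) S)) = sum_list (map (\<lambda>s. \<Sum>i\<in>UNIV. (v $ i) *\<^sub>R G i s) S)"
  for v :: "real^'n::finite" and G :: "'n \<Rightarrow> 'c \<Rightarrow> 'b::real_vector"
  by (induction S) (auto simp: scaleR_add_right sum.distrib)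

definition prodfam :: "('i list \<Rightarrow> 'a \<Rightarrow> 'b::{times,monoid_add}) \<Rightarrow> ('i list \<Rightarrow> 'a \<Rightarrow> 'b) \<Rightarrow> 'i list \<Rightarrow> 'a \<Rightarrow> 'b" where
  "prodfam Da Db \<alpha> x = sum_list (map (\<lambda>(p,q). Da p x * Db q x) (splits \<alpha>))"

lemma pf_mult:
  fixes a b :: "real^'n::finite \<Rightarrow> 'b::{real_normed_algebra, comm_ring}"
  assumes A: "partials_family a Da" and B: "partials_family b Db"
  shows "partials_family (\<lambda>x. a x * b x) (prodfam Da Db)"
  unfolding partials_family_def
proof (intro conjI allI)
  show "prodfam Da Db [] = (\<lambda>x. a x * b x)" using A B by (auto simp: prodfam_def partials_family_def)
  fix \<alpha> :: "'n list" and x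
  have "((\<lambda>x. sum_list (map (\<lambda>pq. (\<lambda>(p,q) x. Da p x * Db q x) pq x) (splits \<alpha>))) has_derivative
        (\<lambda>v. sum_list (map (\<lambda>pq. (\<lambda>(p,q) v. Da p x * (\<Sum>i\<in>UNIV. (v $ i) *\<^sub>R Db (i # q) x) +
               (\<Sum>i\<in>UNIV. (v $ i) *\<^sub>R Da (i # p) x) * Db q x) pq v) (splits \<alpha>)))) (at x)"
    apply (rule has_derivative_sum_list)
    apply (clarsimp)
    apply (rule has_derivative_mult[OF pf_deriv[OF A] pf_deriv[OF B], THEN has_derivative_eq_rhs])
    apply (simp add: add.commute)
    done
  moreover have "(\<lambda>v. sum_list (map (\<lambda>pq. (\<lambda>(p,q) v. Da p x * (\<Sum>i\<in>UNIV. (v $ i) *\<^sub>R Db (i # q) x) +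
               (\<Sum>i\<in>UNIV. (v $ i) *\<^sub>R Da (i # p) x) * Db q x) pq v) (splits \<alpha>))) =
     (\<lambda>v. \<Sum>i\<in>UNIV. (v $ i) *\<^sub>R prodfam Da Db (i # \<alpha>) x)"
  proof
    fix v :: "real^'n"
    show "sum_list (map (\<lambda>pq. (\<lambda>(p,q) v. Da p x * (\<Sum>i\<in>UNIV. (v $ i) *\<^sub>R Db (i # q) x) +
               (\<Sum>i\<in>UNIV. (v $ i) *\<^sub>R Da (i # p) x) * Db q x) pq v) (splits \<alpha>)) =
          (\<Sum>i\<in>UNIV. (v $ i) *\<^sub>R prodfam Da Db (i # \<alpha>) x)"
      unfolding prodfam_def splits.simps sum_list_splits_aux sum_scaleR_sum_list
      by (rule arg_cong[where f=sum_list], rule map_cong)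
         (auto simp: mult_scaleR_left mult_scaleR_right sum_distrib_left sum_distrib_right
               scaleR_add_right sum.distrib)
  qed
  ultimately show "(prodfam Da Db \<alpha> has_derivative (\<lambda>v. \<Sum>i\<in>UNIV. (v $ i) *\<^sub>R prodfam Da Db (i # \<alpha>) x)) (at x)"
    unfolding prodfam_def by (simp add: case_prod_beta')
qed

lemma pf_add:
  assumes A: "partials_family a Da" and B: "partials_family b Db"
  shows "partials_family (\<lambda>x. a x + b x) (\<lambda>\<alpha> x. Da \<alpha> x + Db \<alpha> x)"
  unfolding partials_family_def
proof (intro conjI allI)
  show "(\<lambda>x. Da [] x + Db [] x) = (\<lambda>x. a x + b x)" using A B by (auto simp: partials_family_def)
  fix \<alpha> x
  show "((\<lambda>x. Da \<alpha> x + Db \<alpha> x) has_derivative (\<lambda>v. \<Sum>i\<in>UNIV. v $ i *\<^sub>R (Da (i # \<alpha>) x + Db (i # \<alpha>) x))) (at x)"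
    by (rule has_derivative_add[OF pf_deriv[OF A] pf_deriv[OF B], THEN has_derivative_eq_rhs])
       (simp add: scaleR_add_right sum.distrib)
qed

definition coordfam :: "complex \<Rightarrow> 'n::finite \<Rightarrow> 'n list \<Rightarrow> real^'n \<Rightarrow> complex" where
  "coordfam c i \<alpha> x = (case \<alpha> of [] \<Rightarrow> c * complex_of_real (x $ i) | [j] \<Rightarrow> (if j = i then c else 0) | _ \<Rightarrow> 0)"

lemma pf_coord: "partials_family (\<lambda>x. c * complex_of_real (x $ i)) (coordfam c i)"
  unfolding partials_family_def
proof (intro conjI allI)
  show "coordfam c i [] = (\<lambda>x. c * complex_of_real (x $ i))" by (auto simp: coordfam_def)
  fix \<alpha> :: "'a list" and x :: "real^'a"
  show "(coordfam c i \<alpha> has_derivative (\<lambda>v. \<Sum>j\<in>UNIV. v $ j *\<^sub>R coordfam c i (j # \<alpha>) x)) (at x)"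
  proof (cases \<alpha>)
    case Nil
    have "(\<Sum>j\<in>UNIV. v $ j *\<^sub>R (if j = i then c else 0)) = c * complex_of_real (v $ i)" for v :: "real^'a"
    proof -
      have "(\<Sum>j\<in>UNIV. v $ j *\<^sub>R (if j = i then c else 0)) = (\<Sum>j\<in>UNIV. if j = i then v $ j *\<^sub>R c else 0)"
        by (rule sum.cong) auto
      thus ?thesis by (simp add: scaleR_conv_of_real mult.commute)
    qed
    moreover have "((\<lambda>x. c * complex_of_real (x $ i)) has_derivative (\<lambda>v. c * complex_of_real (v $ i))) (at x)"
    proof -
      have "((\<lambda>x. x $ i) has_derivative (\<lambda>x. x $ i)) (at x)"
        by (rule bounded_linear_imp_has_derivative[OF bounded_linear_vec_nth])
      thus ?thesis by (intro derivative_eq_intros) auto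
    qed
    moreover have "coordfam c i [] = (\<lambda>x. c * complex_of_real (x $ i))" by (simp add: fun_eq_iff coordfam_def)
    ultimately show ?thesis using Nil by (simp add: coordfam_def)
  next
    case (Cons j \<beta>)
    have "coordfam c i \<alpha> = (\<lambda>_. if \<beta> = [] \<and> j = i then c else 0)"
      using Cons by (auto simp: coordfam_def fun_eq_iff split: list.splits)
    moreover have "coordfam c i (k # \<alpha>) x = 0" for k using Cons by (simp add: coordfam_def)
    ultimately show ?thesis by simp
  qed
qed

lemma onorm_sum_vec:
  fixes c :: "'n::finite \<Rightarrow> 'b::real_normed_vector"
  shows "onorm (\<lambda>v::real^'n. \<Sum>i\<in>UNIV. v$i *\<^sub>R c i) \<le> (\<Sum>i\<in>UNIV. norm (c i))"
proof (rule onorm_le)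
  fix v :: "real^'n"
  have "norm (\<Sum>i\<in>UNIV. v$i *\<^sub>R c i) \<le> (\<Sum>i\<in>UNIV. norm (v$i *\<^sub>R c i))" by (rule norm_sum)
  also have "\<dots> \<le> (\<Sum>i\<in>UNIV. norm v * norm (c i))"
    by (rule sum_mono) (simp add: component_le_norm_cart mult_right_mono)
  finally show "norm (\<Sum>i\<in>UNIV. v$i *\<^sub>R c i) \<le> (\<Sum>i\<in>UNIV. norm (c i)) * norm v"
    by (simp add: sum_distrib_left mult.commute)
qed

lemma bl_sum_vec: "bounded_linear (\<lambda>v::real^'n::finite. \<Sum>i\<in>UNIV. v$i *\<^sub>R (c i :: 'b::real_normed_vector))"
  by (intro bounded_linear_sum bounded_linear_scaleR_left bounded_linear_compose[OF _ bounded_linear_vec_nth])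

lemma pf_lipschitz:
  fixes D :: "'n::finite list \<Rightarrow> real^'n \<Rightarrow> 'b::real_normed_vector"
  assumes pf: "partials_family u D" and B: "\<And>\<beta> x. norm (D \<beta> x) \<le> Bf \<beta>"
  shows "norm (D \<alpha> y - D \<alpha> z) \<le> (\<Sum>j\<in>UNIV. Bf (j#\<alpha>)) * norm (y - z)"
proof (rule differentiable_bound[where S=UNIV and f'="\<lambda>x v. \<Sum>j\<in>UNIV. v$j *\<^sub>R D (j#\<alpha>) x"])
  fix x :: "real^'n"
  show "(D \<alpha> has_derivative (\<lambda>v. \<Sum>j\<in>UNIV. v$j *\<^sub>R D (j#\<alpha>) x)) (at x within UNIV)"
    using pf_deriv[OF pf] by simp
  show "onorm (\<lambda>v. \<Sum>j\<in>UNIV. v$j *\<^sub>R D (j#\<alpha>) x) \<le> (\<Sum>j\<in>UNIV. Bf (j#\<alpha>))"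
    by (rule order_trans[OF onorm_sum_vec]) (rule sum_mono, rule B)
qed auto

lemma pf_taylor:
  fixes D :: "'n::finite list \<Rightarrow> real^'n \<Rightarrow> 'b::real_normed_vector"
  assumes pf: "partials_family u D" and B: "\<And>\<beta> x. norm (D \<beta> x) \<le> Bf \<beta>"
  shows "norm (D \<alpha> (x+h) - D \<alpha> x - (\<Sum>i\<in>UNIV. h$i *\<^sub>R D (i#\<alpha>) x))
          \<le> (\<Sum>i\<in>UNIV. \<Sum>j\<in>UNIV. Bf (j#i#\<alpha>)) * norm h ^ 2"
proof -
  let ?L = "\<lambda>i. \<Sum>j\<in>UNIV. Bf (j#i#\<alpha>)"
  let ?f' = "\<lambda>y v. \<Sum>i\<in>UNIV. v$i *\<^sub>R D (i#\<alpha>) y"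
  have "norm (D \<alpha> (x+h) - D \<alpha> x - ?f' x ((x+h) - x)) \<le> norm ((x+h) - x) * ((\<Sum>i\<in>UNIV. ?L i) * norm h)"
  proof (rule differentiable_bound_linearization[where S="cball x (norm h)"])
    fix t :: real assume "t \<in> {0..1}"
    then show "x + t *\<^sub>R (x + h - x) \<in> cball x (norm h)" by (auto simp: dist_norm intro: mult_left_le_one_le)
  next
    fix y assume "y \<in> cball x (norm h)"
    show "(D \<alpha> has_derivative ?f' y) (at y within cball x (norm h))"
      using pf_deriv[OF pf] by (rule has_derivative_at_withinI)
  next
    fix y assume y: "y \<in> cball x (norm h)"
    have "onorm (?f' y - ?f' x) = onorm (\<lambda>v. \<Sum>i\<in>UNIV. v$i *\<^sub>R (D (i#\<alpha>) y - D (i#\<alpha>) x))"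
      by (simp add: fun_diff_def scaleR_diff_right sum_subtractf)
    also have "\<dots> \<le> (\<Sum>i\<in>UNIV. norm (D (i#\<alpha>) y - D (i#\<alpha>) x))" by (rule onorm_sum_vec)
    also have "\<dots> \<le> (\<Sum>i\<in>UNIV. ?L i * norm (y - x))"
      by (rule sum_mono) (rule pf_lipschitz[OF pf B])
    also have "\<dots> \<le> (\<Sum>i\<in>UNIV. ?L i * norm h)"
    proof (rule sum_mono, rule mult_left_mono)
      show "norm (y - x) \<le> norm h" using y by (simp add: dist_norm norm_minus_commute)
      fix i show "0 \<le> ?L i" by (rule sum_nonneg) (use B in \<open>meson norm_ge_zero order_trans\<close>)
    qed
    finally show "onorm (?f' y - ?f' x) \<le> (\<Sum>i\<in>UNIV. ?L i) * norm h" by (simp add: sum_distrib_right)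
  qed auto
  thus ?thesis by (simp add: power2_eq_square mult_ac)
qed

lemma DUI:
  fixes K :: "real^'n::finite \<Rightarrow> real^'n \<Rightarrow> 'b::{banach,second_countable_topology}"
  assumes K: "\<And>z. integrable lborel (K z)" and L: "\<And>i. integrable lborel (L i)"
    and w: "integrable lborel w"
    and bd: "\<And>h y. norm h < 1 \<Longrightarrow> norm (K (x+h) y - K x y - (\<Sum>i\<in>UNIV. h$i *\<^sub>R L i y)) \<le> C * norm h ^ 2 * w y"
  shows "((\<lambda>z. \<integral>y. K z y \<partial>lborel) has_derivative (\<lambda>h. \<Sum>i\<in>UNIV. h$i *\<^sub>R (\<integral>y. L i y \<partial>lborel))) (at x)"
  unfolding has_derivative_at
proof
  show "bounded_linear (\<lambda>h. \<Sum>i\<in>UNIV. h$i *\<^sub>R (\<integral>y. L i y \<partial>lborel))" by (rule bl_sum_vec)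
  let ?W = "\<integral>y. w y \<partial>lborel"
  show "(\<lambda>h. norm ((\<integral>y. K (x+h) y \<partial>lborel) - (\<integral>y. K x y \<partial>lborel) - (\<Sum>i\<in>UNIV. h$i *\<^sub>R (\<integral>y. L i y \<partial>lborel))) / norm h) \<midarrow>0\<rightarrow> 0"
  proof (rule Lim_null_comparison)
    show "\<forall>\<^sub>F h in at 0. norm (norm ((\<integral>y. K (x+h) y \<partial>lborel) - (\<integral>y. K x y \<partial>lborel) - (\<Sum>i\<in>UNIV. h$i *\<^sub>R (\<integral>y. L i y \<partial>lborel))) / norm h) \<le> C * ?W * norm h"
    proof -
      have ev: "\<forall>\<^sub>F h in at (0::real^'n). norm h < 1 \<and> h \<noteq> 0"
        unfolding eventually_at by (intro exI[of _ 1]) (auto simp: dist_norm)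
      show ?thesis
      proof (rule eventually_mono[OF ev])
      fix h :: "real^'n" assume h: "norm h < 1 \<and> h \<noteq> 0"
      have int: "integrable lborel (\<lambda>y. K (x+h) y - K x y - (\<Sum>i\<in>UNIV. h$i *\<^sub>R L i y))"
        using K L by (intro Bochner_Integration.integrable_diff Bochner_Integration.integrable_sum integrable_scaleR_right) auto
      have eq: "(\<integral>y. K (x+h) y \<partial>lborel) - (\<integral>y. K x y \<partial>lborel) - (\<Sum>i\<in>UNIV. h$i *\<^sub>R (\<integral>y. L i y \<partial>lborel))
           = (\<integral>y. K (x+h) y - K x y - (\<Sum>i\<in>UNIV. h$i *\<^sub>R L i y) \<partial>lborel)"
        using K L by (simp add: Bochner_Integration.integral_diff Bochner_Integration.integrable_diff Bochner_Integration.integral_sum Bochner_Integration.integrable_sum integrable_scaleR_right)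
      have "norm (\<integral>y. K (x+h) y - K x y - (\<Sum>i\<in>UNIV. h$i *\<^sub>R L i y) \<partial>lborel) \<le> (\<integral>y. C * norm h ^ 2 * w y \<partial>lborel)"
        by (rule Bochner_Integration.integral_norm_bound_integral[OF int]) (use w h bd in \<open>auto\<close>)
      also have "\<dots> = C * norm h ^ 2 * ?W" by simp
      finally have "norm (\<integral>y. K (x+h) y - K x y - (\<Sum>i\<in>UNIV. h$i *\<^sub>R L i y) \<partial>lborel) \<le> C * norm h ^ 2 * ?W" .
      with h show "norm (norm ((\<integral>y. K (x+h) y \<partial>lborel) - (\<integral>y. K x y \<partial>lborel) - (\<Sum>i\<in>UNIV. h$i *\<^sub>R (\<integral>y. L i y \<partial>lborel))) / norm h) \<le> C * ?W * norm h"
        by (simp add: eq divide_le_eq power2_eq_square mult_ac dist_norm)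
    qed
    qed
    show "((\<lambda>h. C * ?W * norm h) \<longlongrightarrow> 0) (at 0)"
      by (auto intro!: tendsto_eq_intros)
  qed
qed

lemma onorm_real_scaleR: "onorm (\<lambda>v::real. v *\<^sub>R c) = norm c"
  by (simp add: onorm_scaleR_left[OF bounded_linear_ident] onorm_id)

lemma cis_minus_one_bound: "norm (cis s - 1) \<le> \<bar>s\<bar>"
proof -
  have "norm (cis s - cis 0) \<le> 1 * norm (s - 0)"
  proof (rule differentiable_bound[where S="closed_segment 0 s" and f'="\<lambda>t v. v *\<^sub>R (\<i> * cis t)"])
    fix t assume "t \<in> closed_segment 0 s"
    show "(cis has_derivative (\<lambda>v. v *\<^sub>R (\<i> * cis t))) (at t within closed_segment 0 s)"
      using has_derivative_cis[OF has_derivative_ident[of "at t within closed_segment 0 s"]] by simp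
    have "onorm (\<lambda>v::real. v *\<^sub>R (\<i> * cis t)) = norm (\<i> * cis t)"
      by (rule onorm_real_scaleR)
    thus "onorm (\<lambda>v::real. v *\<^sub>R (\<i> * cis t)) \<le> 1" by (simp add: norm_mult)
  qed auto
  thus ?thesis by simp
qed

lemma cis_taylor_bound: "norm (cis t - 1 - \<i> * complex_of_real t) \<le> t ^ 2"
proof -
  let ?f = "\<lambda>s. cis s - 1 - \<i> * complex_of_real s"
  have "norm (?f t - ?f 0) \<le> \<bar>t\<bar> * norm (t - 0)"
  proof (rule differentiable_bound[where S="closed_segment 0 t" and f'="\<lambda>s v. v *\<^sub>R (\<i> * cis s - \<i>)"])
    fix s assume s: "s \<in> closed_segment 0 t"
    show "(?f has_derivative (\<lambda>v. v *\<^sub>R (\<i> * cis s - \<i>))) (at s within closed_segment 0 t)"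
      by (auto intro!: derivative_eq_intros simp: algebra_simps scaleR_conv_of_real)
    have "onorm (\<lambda>v::real. v *\<^sub>R (\<i> * cis s - \<i>)) = norm (\<i> * cis s - \<i>)"
      by (rule onorm_real_scaleR)
    also have "\<dots> = norm (cis s - 1)"
    proof -
      have "\<i> * cis s - \<i> = \<i> * (cis s - 1)" by (simp add: algebra_simps)
      thus ?thesis by (simp add: norm_mult)
    qed
    also have "\<dots> \<le> \<bar>s\<bar>" by (rule cis_minus_one_bound)
    also have "\<dots> \<le> \<bar>t\<bar>" using s by (auto simp: closed_segment_eq_real_ivl split: if_splits)
    finally show "onorm (\<lambda>v::real. v *\<^sub>R (\<i> * cis s - \<i>)) \<le> \<bar>t\<bar>" .
  qed auto
  thus ?thesis by (simp add: power2_eq_square abs_mult_self)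
qed

lemma cis_borel[measurable]: "(\<lambda>x::real^'n::finite. cis (- 2 * pi * (x \<bullet> \<xi>))) \<in> borel_measurable borel"
  by (intro borel_measurable_continuous_onI continuous_intros)

lemma fourier_lborel:
  fixes u :: "real^'n::finite \<Rightarrow> complex"
  assumes [measurable]: "u \<in> borel_measurable borel"
  shows "fourier u \<xi> = (\<integral>x. u x * cis (- 2 * pi * (x \<bullet> \<xi>)) \<partial>lborel)"
  unfolding fourier_def by (rule int_leb_borel(1)) measurable

lemma fourier_norm_le:
  fixes u :: "real^'n::finite \<Rightarrow> complex"
  assumes [measurable]: "u \<in> borel_measurable borel" and "integrable lborel u"
  shows "norm (fourier u \<xi>) \<le> (\<integral>x. norm (u x) \<partial>lborel)"
proof -
  have "norm (fourier u \<xi>) \<le> (\<integral>x. norm (u x * cis (- 2 * pi * (x \<bullet> \<xi>))) \<partial>lborel)"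
    unfolding fourier_lborel[OF assms(1)] by (rule integral_norm_bound)
  also have "\<dots> = (\<integral>x. norm (u x) \<partial>lborel)" by (simp add: norm_mult)
  finally show ?thesis .
qed

definition ccs :: "(real^'n::finite \<Rightarrow> complex) \<Rightarrow> bool" where
  "ccs v \<longleftrightarrow> continuous_on UNIV v \<and> (\<exists>R. \<forall>x. R < norm x \<longrightarrow> v x = 0)"

lemma ccs_integrable: "ccs v \<Longrightarrow> integrable lborel v"
  unfolding ccs_def using csupp_integrable by blast

lemma ccs_borel: "ccs v \<Longrightarrow> v \<in> borel_measurable borel"
  unfolding ccs_def by (simp add: borel_measurable_continuous_onI)

lemma ccs_mult_cont: "ccs v \<Longrightarrow> continuous_on UNIV g \<Longrightarrow> ccs (\<lambda>x. v x * g x)"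
  unfolding ccs_def by (auto intro: continuous_intros)

lemma ccs_cont_mult: "ccs v \<Longrightarrow> continuous_on UNIV g \<Longrightarrow> ccs (\<lambda>x. g x * v x)"
  unfolding ccs_def by (auto intro: continuous_intros)

lemma fourier_has_derivative:
  fixes v :: "real^'n::finite \<Rightarrow> complex"
  assumes v: "ccs v"
  shows "(fourier v has_derivative
          (\<lambda>h. \<Sum>i\<in>UNIV. h$i *\<^sub>R fourier (\<lambda>x. (- 2 * pi * \<i> * complex_of_real (x$i)) * v x) \<xi>)) (at \<xi>)"
proof -
  let ?K = "\<lambda>\<eta> x. v x * cis (- 2 * pi * (x \<bullet> \<eta>))"
  let ?L = "\<lambda>i x. (- 2 * pi * \<i> * complex_of_real (x$i)) * v x * cis (- 2 * pi * (x \<bullet> \<xi>))"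
  have cI: "continuous_on UNIV (\<lambda>x::real^'n. complex_of_real (x$i))" for i
    by (intro continuous_intros)
  have ccsK: "ccs (?K \<eta>)" for \<eta> by (rule ccs_mult_cont[OF v]) (intro continuous_intros)
  have ccsL: "ccs (?L i)" for i
    by (rule ccs_mult_cont[OF ccs_cont_mult[OF v]]) (intro continuous_intros)+
  have w: "integrable lborel (\<lambda>x. norm (v x) * norm x ^ 2)"
    using v unfolding ccs_def by (auto intro!: continuous_intros csupp_integrable)
  have eqF: "fourier v = (\<lambda>\<eta>. \<integral>x. ?K \<eta> x \<partial>lborel)"
    by (rule ext, rule fourier_lborel[OF ccs_borel[OF v]])
  have eqL: "fourier (\<lambda>x. (- 2 * pi * \<i> * complex_of_real (x$i)) * v x) \<xi> = (\<integral>x. ?L i x \<partial>lborel)" for i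
  proof -
    have cc: "ccs (\<lambda>x. (- 2 * pi * \<i> * complex_of_real (x$i)) * v x)"
      by (rule ccs_cont_mult[OF v]) (intro continuous_intros)
    show ?thesis by (subst fourier_lborel[OF ccs_borel[OF cc]]) (simp add: mult.assoc)
  qed
  have "((\<lambda>\<eta>. \<integral>x. ?K \<eta> x \<partial>lborel) has_derivative (\<lambda>h. \<Sum>i\<in>UNIV. h$i *\<^sub>R (\<integral>x. ?L i x \<partial>lborel))) (at \<xi>)"
  proof (rule DUI[where C="4 * pi^2"])
    show "integrable lborel (?K z)" for z by (rule ccs_integrable[OF ccsK])
    show "integrable lborel (?L i)" for i by (rule ccs_integrable[OF ccsL])
    show "integrable lborel (\<lambda>x. norm (v x) * norm x ^ 2)" by (rule w)
    fix h y :: "real^'n"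
    let ?t = "- 2 * pi * (y \<bullet> h)"
    have s: "(\<Sum>i\<in>UNIV. h$i *\<^sub>R ?L i y) = \<i> * complex_of_real ?t * (v y * cis (- 2 * pi * (y \<bullet> \<xi>)))"
      by (simp add: scaleR_conv_of_real inner_vec_def sum_distrib_left sum_distrib_right mult_ac)
    have c: "cis (- 2 * pi * (y \<bullet> (\<xi> + h))) = cis (- 2 * pi * (y \<bullet> \<xi>)) * cis ?t"
      by (simp add: inner_add_right cis_mult algebra_simps)
    have "?K (\<xi> + h) y - ?K \<xi> y - (\<Sum>i\<in>UNIV. h$i *\<^sub>R ?L i y)
          = (v y * cis (- 2 * pi * (y \<bullet> \<xi>))) * (cis ?t - 1 - \<i> * complex_of_real ?t)"
      unfolding s c by (simp add: algebra_simps)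
    also have "norm \<dots> \<le> norm (v y) * ?t ^ 2"
      unfolding norm_mult norm_cis mult_1_right using cis_taylor_bound[of ?t]
      by (intro mult_left_mono) simp_all
    also have "\<dots> \<le> norm (v y) * (4 * pi^2 * norm h ^ 2 * norm y ^ 2)"
    proof (rule mult_left_mono)
      have "\<bar>y \<bullet> h\<bar> \<le> norm y * norm h" by (rule Cauchy_Schwarz_ineq2)
      hence "\<bar>y \<bullet> h\<bar>^2 \<le> (norm y * norm h)^2" by (rule power_mono) simp
      hence "(y \<bullet> h)^2 \<le> (norm y * norm h)^2" by simp
      thus "?t ^ 2 \<le> 4 * pi^2 * norm h ^ 2 * norm y ^ 2" by (simp add: power_mult_distrib mult_ac)
    qed simp
    finally show "norm (?K (\<xi> + h) y - ?K \<xi> y - (\<Sum>i\<in>UNIV. h$i *\<^sub>R ?L i y)) \<le> 4 * pi^2 * norm h ^ 2 * (norm (v y) * norm y ^ 2)"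
      by (simp add: mult_ac)
  qed
  thus ?thesis unfolding eqF eqL .
qed

lemma fourier_partial:
  fixes v :: "real^'n::finite \<Rightarrow> complex"
  assumes pf: "partials_family v D" and cD: "\<And>\<alpha>. continuous_on UNIV (D \<alpha>)"
    and zD: "\<And>\<alpha> x. R < norm x \<Longrightarrow> D \<alpha> x = 0" and B: "\<And>\<beta> x. norm (D \<beta> x) \<le> Bf \<beta>"
  shows "fourier (D [i]) \<xi> = 2 * pi * \<i> * complex_of_real (\<xi> $ i) * fourier v \<xi>"
proof -
  let ?E = "\<lambda>x::real^'n. cis (- 2 * pi * (x \<bullet> \<xi>))"
  let ?K = "\<lambda>p x. v (x + p) * ?E x"
  let ?L = "\<lambda>i x. D [i] x * ?E x"
  have v0: "D [] = v" using pf by (simp add: partials_family_def)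
  have ccsD: "ccs (D \<alpha>)" for \<alpha> using cD zD unfolding ccs_def by blast
  have ccsv: "ccs v" using ccsD[of "[]"] v0 by simp
  have cv: "continuous_on UNIV v" using ccsv ccs_def by blast
  have phi: "(\<integral>x. ?K p x \<partial>lborel) = cis (2 * pi * (p \<bullet> \<xi>)) * fourier v \<xi>" for p
  proof -
    let ?G = "\<lambda>z. v z * cis (- 2 * pi * ((z - p) \<bullet> \<xi>))"
    have Gb: "?G \<in> borel_measurable borel"
      by (intro borel_measurable_continuous_onI continuous_intros cv)
    have "(\<integral>x. ?K p x \<partial>lborel) = (\<integral>x. ?G (p + x) \<partial>lborel)" by (simp add: add.commute)
    also have "\<dots> = (\<integral>z. ?G z \<partial>lborel)" by (rule lborel_transl(1)[OF Gb])
    also have "\<dots> = (\<integral>z. cis (2 * pi * (p \<bullet> \<xi>)) * (v z * ?E z) \<partial>lborel)"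
    proof (rule Bochner_Integration.integral_cong)
      fix z :: "real^'n"
      have "cis (2 * pi * (p \<bullet> \<xi>)) * ?E z = cis (- 2 * pi * ((z - p) \<bullet> \<xi>))"
        unfolding cis_mult by (simp add: inner_diff_left algebra_simps)
      thus "?G z = cis (2 * pi * (p \<bullet> \<xi>)) * (v z * ?E z)" by (simp add: mult_ac)
    qed simp
    also have "\<dots> = cis (2 * pi * (p \<bullet> \<xi>)) * fourier v \<xi>"
      by (simp add: fourier_lborel[OF ccs_borel[OF ccsv]])
    finally show ?thesis .
  qed
  let ?C = "\<Sum>i\<in>UNIV. \<Sum>j\<in>UNIV. Bf (j#i#[])"
  have d1: "((\<lambda>p. \<integral>x. ?K p x \<partial>lborel) has_derivative (\<lambda>h. \<Sum>i\<in>UNIV. h$i *\<^sub>R (\<integral>x. ?L i x \<partial>lborel))) (at 0)"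
  proof (rule DUI[where C="?C" and w="indicator (cball 0 (R+1))"])
    show "integrable lborel (?K z)" for z
    proof (rule csupp_integrable[where R="R + norm z"])
      show "continuous_on UNIV (?K z)"
        by (intro continuous_intros continuous_on_compose2[OF cv]) auto
      fix x :: "real^'n" assume "R + norm z < norm x"
      hence "R < norm (x + z)" using norm_triangle_ineq2[of x "-z"] by simp
      thus "?K z x = 0" using zD[of "x+z" "[]"] v0 by simp
    qed
    show "integrable lborel (?L i)" for i
      by (rule ccs_integrable, rule ccs_mult_cont[OF ccsD]) (intro continuous_intros)
    show "integrable lborel (indicator (cball 0 (R+1)) :: real^'n \<Rightarrow> real)"
      using emeasure_lborel_cball_finite[of "0::real^'n" "R+1"] by (simp add: integrable_indicator_iff top_unique[symmetric] less_top)
    fix h y :: "real^'n" assume h: "norm h < 1"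
    have eq: "?K (0 + h) y - ?K 0 y - (\<Sum>i\<in>UNIV. h$i *\<^sub>R ?L i y) = ?E y * (D [] (y + h) - D [] y - (\<Sum>i\<in>UNIV. h$i *\<^sub>R D [i] y))"
      by (simp add: v0 algebra_simps scaleR_conv_of_real sum_distrib_left sum_distrib_right)
    show "norm (?K (0 + h) y - ?K 0 y - (\<Sum>i\<in>UNIV. h$i *\<^sub>R ?L i y)) \<le> ?C * norm h ^ 2 * indicator (cball 0 (R+1)) y"
    proof (cases "norm y \<le> R + 1")
      case True
      have "norm (D [] (y + h) - D [] y - (\<Sum>i\<in>UNIV. h$i *\<^sub>R D [i] y)) \<le> ?C * norm h ^ 2"
        by (rule pf_taylor[OF pf B])
      thus ?thesis using True unfolding eq by (simp add: norm_mult)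
    next
      case False
      have "R < norm (y + h)" using False h norm_triangle_ineq2[of y "-h"] by simp
      hence "D [] (y + h) = 0" "D [] y = 0" "D [i] y = 0" for i using False zD by auto
      thus ?thesis unfolding eq using False by simp
    qed
  qed
  have d2: "((\<lambda>p. \<integral>x. ?K p x \<partial>lborel) has_derivative (\<lambda>h. (2 * pi * (h \<bullet> \<xi>)) *\<^sub>R (\<i> * fourier v \<xi>))) (at 0)"
    unfolding phi by (auto intro!: derivative_eq_intros)
  have "(\<lambda>h. \<Sum>i\<in>UNIV. h$i *\<^sub>R (\<integral>x. ?L i x \<partial>lborel)) = (\<lambda>h. (2 * pi * (h \<bullet> \<xi>)) *\<^sub>R (\<i> * fourier v \<xi>))"
    by (rule has_derivative_unique[OF d1 d2])
  from fun_cong[OF this, of "axis i 1"]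
  have "(\<integral>x. ?L i x \<partial>lborel) = (2 * pi * \<xi> $ i) *\<^sub>R (\<i> * fourier v \<xi>)"
    by (simp add: sum_axis_scaleR inner_axis')
  moreover have "fourier (D [i]) \<xi> = (\<integral>x. ?L i x \<partial>lborel)"
    by (rule fourier_lborel[OF ccs_borel[OF ccsD]])
  ultimately show ?thesis by (simp add: scaleR_conv_of_real mult_ac)
qed

lemma testf_fam:
  assumes "testf u"
  obtains D R Bf where "partials_family u D" "\<And>\<alpha>. continuous_on UNIV (D \<alpha>)"
    "\<And>\<alpha> x. R < norm x \<Longrightarrow> D \<alpha> x = 0" "\<And>\<beta> x. norm (D \<beta> x) \<le> Bf \<beta>"
    "\<And>x. R \<le> norm x \<Longrightarrow> u x = 0"
proof -
  obtain D R where pf: "partials_family u D" and c: "\<And>\<alpha>. continuous_on UNIV (D \<alpha>)"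
    and z: "\<And>\<alpha> x. R < norm x \<Longrightarrow> D \<alpha> x = 0" and zu: "\<And>x. R \<le> norm x \<Longrightarrow> u x = 0"
    using testf_D[OF assms] by metis
  have "\<forall>\<beta>. \<exists>B. \<forall>x. norm (D \<beta> x) \<le> B" using csupp_bounded[OF c z] by blast
  then obtain Bf where "\<forall>\<beta> x. norm (D \<beta> x) \<le> Bf \<beta>" by metis
  thus ?thesis using that[OF pf c z _ zu] by blast
qed

lemma testf_ccs: "testf u \<Longrightarrow> ccs u"
  unfolding ccs_def by (erule testf_fam) (metis partials_family_def)

lemma fourier_iter:
  fixes v :: "real^'n::finite \<Rightarrow> complex"
  assumes pf: "partials_family v D" and cD: "\<And>\<alpha>. continuous_on UNIV (D \<alpha>)"
    and zD: "\<And>\<alpha> x. R < norm x \<Longrightarrow> D \<alpha> x = 0" and B: "\<And>\<beta> x. norm (D \<beta> x) \<le> Bf \<beta>"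
  shows "fourier (D \<beta>) \<xi> = prod_list (map (\<lambda>i. 2 * pi * \<i> * complex_of_real (\<xi> $ i)) \<beta>) * fourier v \<xi>"
proof (induction \<beta>)
  case Nil
  then show ?case using pf by (simp add: partials_family_def)
next
  case (Cons i \<beta>)
  have "fourier ((\<lambda>\<gamma>. D (\<gamma> @ \<beta>)) [i]) \<xi> = 2 * pi * \<i> * complex_of_real (\<xi> $ i) * fourier (D \<beta>) \<xi>"
    by (rule fourier_partial[OF pf_shift[OF pf], where R=R and Bf="\<lambda>\<gamma>. Bf (\<gamma> @ \<beta>)"])
       (auto intro: cD zD B)
  thus ?case using Cons by simp
qed

lemma testf_decay:
  fixes v :: "real^'n::finite \<Rightarrow> complex"
  assumes "testf v"
  shows "\<exists>C. \<forall>\<xi>. (1 + norm \<xi>)^k * norm (fourier v \<xi>) \<le> C"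
proof -
  obtain D R Bf where pf: "partials_family v D" and cD: "\<And>\<alpha>. continuous_on UNIV (D \<alpha>)"
    and zD: "\<And>\<alpha> x. R < norm x \<Longrightarrow> D \<alpha> x = 0" and B: "\<And>\<beta> x. norm (D \<beta> x) \<le> Bf \<beta>"
    using testf_fam[OF assms] by metis
  have v0: "D [] = v" using pf by (simp add: partials_family_def)
  have ccsD: "ccs (D \<alpha>)" for \<alpha> using cD zD unfolding ccs_def by blast
  define M where "M i = (\<integral>x. norm (D (replicate k i) x) \<partial>lborel)" for i
  define M0 where "M0 = (\<integral>x. norm (v x) \<partial>lborel)"
  have M0: "norm (fourier v \<xi>) \<le> M0" for \<xi>
    unfolding M0_def using fourier_norm_le[OF ccs_borel ccs_integrable, OF ccsD ccsD, of "[]"] v0 by simp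
  have Mi: "\<bar>\<xi> $ i\<bar>^k * norm (fourier v \<xi>) \<le> M i" for \<xi> i
  proof -
    have "norm (fourier (D (replicate k i)) \<xi>) \<le> M i"
      unfolding M_def by (rule fourier_norm_le[OF ccs_borel ccs_integrable, OF ccsD ccsD])
    moreover have "fourier (D (replicate k i)) \<xi> = (2 * pi * \<i> * complex_of_real (\<xi> $ i))^k * fourier v \<xi>"
      using fourier_iter[OF pf cD zD B, where \<beta>="replicate k i" and \<xi>=\<xi>] by (simp add: prod_list_replicate)
    moreover have "\<bar>\<xi> $ i\<bar>^k \<le> (2 * pi * \<bar>\<xi> $ i\<bar>)^k"
      by (rule power_mono) (use pi_gt3 in \<open>auto intro: mult_le_cancel_right1[THEN iffD2]\<close>)
    moreover have "norm ((2 * pi * \<i> * complex_of_real (\<xi> $ i))^k * fourier v \<xi>) = (2 * pi * \<bar>\<xi> $ i\<bar>)^k * norm (fourier v \<xi>)"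
      by (simp add: norm_mult norm_power abs_mult)
    ultimately show ?thesis
      by (smt (verit, best) mult_right_mono norm_ge_zero)
  qed
  have Mpos: "0 \<le> M i" for i unfolding M_def by simp
  have M0pos: "0 \<le> M0" unfolding M0_def by simp
  let ?N = "real CARD('n)"
  show ?thesis
  proof (intro exI allI)
    fix \<xi> :: "real^'n"
    have "Max (range (\<lambda>i. \<bar>\<xi> $ i\<bar>)) \<in> range (\<lambda>i. \<bar>\<xi> $ i\<bar>)" by (rule Max_in) auto
    then obtain j where jeq: "\<bar>\<xi> $ j\<bar> = Max (range (\<lambda>i. \<bar>\<xi> $ i\<bar>))" by (metis (no_types, lifting) imageE)
    have j: "\<bar>\<xi> $ i\<bar> \<le> \<bar>\<xi> $ j\<bar>" for i unfolding jeq by (rule Max_ge) auto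
    define a where "a = max 1 \<bar>\<xi> $ j\<bar>"
    have "norm \<xi> \<le> (\<Sum>i\<in>UNIV. \<bar>\<xi> $ i\<bar>)" by (rule norm_le_l1_cart)
    also have "\<dots> \<le> (\<Sum>i\<in>(UNIV::'n set). a)" by (rule sum_mono) (use j in \<open>force simp: a_def intro: le_max_iff_disj[THEN iffD2]\<close>)
    also have "\<dots> = ?N * a" by simp
    finally have "1 + norm \<xi> \<le> (?N + 1) * a" using a_def by (simp add: algebra_simps)
    hence "(1 + norm \<xi>)^k \<le> ((?N + 1) * a)^k" by (rule power_mono) simp
    hence A: "(1 + norm \<xi>)^k * norm (fourier v \<xi>) \<le> (?N + 1)^k * (a^k * norm (fourier v \<xi>))"
      unfolding mult.assoc[symmetric] power_mult_distrib[symmetric] by (rule mult_right_mono) simp_all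
    have "a^k * norm (fourier v \<xi>) \<le> M0 + (\<Sum>i\<in>UNIV. M i)"
    proof (cases "\<bar>\<xi> $ j\<bar> \<le> 1")
      case True
      hence "a = 1" by (simp add: a_def)
      thus ?thesis using M0[of \<xi>] sum_nonneg[of UNIV M] Mpos by simp
    next
      case False
      hence "a = \<bar>\<xi> $ j\<bar>" by (simp add: a_def)
      moreover have "M j \<le> (\<Sum>i\<in>UNIV. M i)" by (rule member_le_sum) (auto simp: Mpos)
      ultimately show ?thesis using Mi[of \<xi> j] M0pos by simp
    qed
    with A show "(1 + norm \<xi>)^k * norm (fourier v \<xi>) \<le> (?N + 1)^k * (M0 + (\<Sum>i\<in>UNIV. M i))"
      by (smt (verit) mult_left_mono zero_le_power of_nat_0_le_iff)
  qed
qed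


lemma testf_coord:
  assumes "testf v" shows "testf (\<lambda>x. (c * complex_of_real (x$i)) * v x)"
proof -
  obtain D R Bf where pf: "partials_family v D" and zu: "\<And>x. R \<le> norm x \<Longrightarrow> v x = 0"
    using testf_fam[OF assms] by metis
  show ?thesis unfolding testf_def smooth_fun_def
    using pf_mult[OF pf_coord pf] zu by auto
qed

fun mpoly :: "'n::finite list \<Rightarrow> (real^'n \<Rightarrow> complex) \<Rightarrow> real^'n \<Rightarrow> complex" where
  "mpoly [] v = v"
| "mpoly (i#\<alpha>) v = (\<lambda>x. (- 2 * pi * \<i> * complex_of_real (x$i)) * mpoly \<alpha> v x)"

lemma testf_mpoly: "testf v \<Longrightarrow> testf (mpoly \<alpha> v)"
proof (induction \<alpha>)
  case (Cons i \<alpha>)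
  show ?case using testf_coord[OF Cons.IH[OF Cons.prems], of "- 2 * pi * \<i>" i] by simp
qed simp

lemma schwartz_fourier_testf:
  assumes "testf v"
  shows "partials_family (fourier v) (\<lambda>\<alpha>. fourier (mpoly \<alpha> v))"
    "\<And>\<alpha> k. \<exists>C. \<forall>x. (1 + norm x) ^ k * norm (fourier (mpoly \<alpha> v) x) \<le> C"
    "schwartz (fourier v)"
proof -
  show pf: "partials_family (fourier v) (\<lambda>\<alpha>. fourier (mpoly \<alpha> v))"
    unfolding partials_family_def
    using fourier_has_derivative[OF testf_ccs[OF testf_mpoly[OF assms]]] by simp
  show dec: "\<exists>C. \<forall>x. (1 + norm x) ^ k * norm (fourier (mpoly \<alpha> v) x) \<le> C" for \<alpha> k
    by (rule testf_decay[OF testf_mpoly[OF assms]])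
  show "schwartz (fourier v)" unfolding schwartz_def using pf dec by blast
qed

lemma cis_borel_leb[measurable]: "(\<lambda>x::real^'n::finite. cis (- 2 * pi * (x \<bullet> \<xi>))) \<in> borel_measurable lebesgue"
  by (rule measurable_completion, unfold measurable_lborel2, rule cis_borel)

lemma fourier_continuous:
  fixes a :: "real^'n::finite \<Rightarrow> complex"
  assumes a: "integrable lebesgue a"
  shows "continuous_on UNIV (fourier a)"
proof (rule continuous_at_imp_continuous_on, intro ballI continuous_at_sequentiallyI)
  fix \<xi> :: "real^'n" and u :: "nat \<Rightarrow> real^'n" assume u: "u \<longlonglongrightarrow> \<xi>"
  have am[measurable]: "a \<in> borel_measurable lebesgue" using a by auto
  show "(\<lambda>n. fourier a (u n)) \<longlonglongrightarrow> fourier a \<xi>"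
    unfolding fourier_def
  proof (rule integral_dominated_convergence[where w="\<lambda>x. norm (a x)"])
    show "integrable lebesgue (\<lambda>x. norm (a x))" using a by simp
    show "AE x in lebesgue. (\<lambda>n. a x * cis (- 2 * pi * (x \<bullet> u n))) \<longlonglongrightarrow> a x * cis (- 2 * pi * (x \<bullet> \<xi>))"
      by (intro AE_I2 tendsto_intros u)
    show "AE x in lebesgue. norm (a x * cis (- 2 * pi * (x \<bullet> u n))) \<le> norm (a x)" for n
      by (simp add: norm_mult)
  qed measurable
qed

lemma integrable_mult_bounded:
  fixes a :: "'a \<Rightarrow> complex"
  assumes a: "integrable M a" and g: "g \<in> borel_measurable M" and B: "\<And>x. norm (g x) \<le> B"
  shows "integrable M (\<lambda>x. a x * g x)"
proof (rule Bochner_Integration.integrable_bound[where f="\<lambda>x. B * norm (a x)"])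
  show "integrable M (\<lambda>x. B * norm (a x))" using a by simp
  have "a \<in> borel_measurable M" using a by auto
  thus "(\<lambda>x. a x * g x) \<in> borel_measurable M" using g by measurable
  show "AE x in M. norm (a x * g x) \<le> norm (B * norm (a x))"
  proof (intro AE_I2)
    fix x
    have "norm (a x * g x) \<le> norm (a x) * B" by (simp add: norm_mult mult_left_mono B)
    also have "\<dots> \<le> norm (B * norm (a x))" by (simp add: abs_mult mult.commute mult_right_mono)
    finally show "norm (a x * g x) \<le> norm (B * norm (a x))" .
  qed
qed

lemma conv_lborel:
  fixes a b :: "real^'n::finite \<Rightarrow> complex"
  assumes [measurable]: "a \<in> borel_measurable borel" "b \<in> borel_measurable borel"
  shows "conv a b x = (\<integral>y. a y * b (x - y) \<partial>lborel)"
  unfolding conv_def by (rule int_leb_borel(1)) measurable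

lemma conv_testf_deriv:
  fixes a :: "real^'n::finite \<Rightarrow> complex"
  assumes a: "integrable lborel a" and [measurable]: "a \<in> borel_measurable borel"
    and pf: "partials_family v D" and cD: "\<And>\<alpha>. continuous_on UNIV (D \<alpha>)"
    and B: "\<And>\<beta> x. norm (D \<beta> x) \<le> Bf \<beta>"
  shows "partials_family (conv a v) (\<lambda>\<alpha>. conv a (D \<alpha>))"
    "norm (conv a (D \<alpha>) x) \<le> (\<integral>y. norm (a y) \<partial>lborel) * Bf \<alpha>"
proof -
  have Db[measurable]: "D \<alpha> \<in> borel_measurable borel" for \<alpha> by (rule borel_measurable_continuous_onI[OF cD])
  have cv: "conv a (D \<alpha>) = (\<lambda>x. \<integral>y. a y * D \<alpha> (x - y) \<partial>lborel)" for \<alpha>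
    by (rule ext, rule conv_lborel) measurable
  have int: "integrable lborel (\<lambda>y. a y * D \<alpha> (x - y))" for \<alpha> x
    by (rule integrable_mult_bounded[OF a _ B]) measurable
  show "norm (conv a (D \<alpha>) x) \<le> (\<integral>y. norm (a y) \<partial>lborel) * Bf \<alpha>"
  proof -
    have "norm (conv a (D \<alpha>) x) \<le> (\<integral>y. norm (a y) * Bf \<alpha> \<partial>lborel)"
      unfolding cv
      by (rule Bochner_Integration.integral_norm_bound_integral[OF int]) (use a B in \<open>auto simp: norm_mult mult_left_mono\<close>)
    thus ?thesis by simp
  qed
  show "partials_family (conv a v) (\<lambda>\<alpha>. conv a (D \<alpha>))"
    unfolding partials_family_def
  proof (intro conjI allI)
    show "conv a (D []) = conv a v" using pf by (simp add: partials_family_def)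
    fix \<alpha> :: "'n list" and x :: "real^'n"
    show "(conv a (D \<alpha>) has_derivative (\<lambda>h. \<Sum>i\<in>UNIV. h $ i *\<^sub>R conv a (D (i # \<alpha>)) x)) (at x)"
      unfolding cv
    proof (rule DUI[where C="\<Sum>i\<in>UNIV. \<Sum>j\<in>UNIV. Bf (j#i#\<alpha>)" and w="\<lambda>y. norm (a y)"])
      show "integrable lborel (\<lambda>y. a y * D \<alpha> (z - y))" for z by (rule int)
      show "integrable lborel (\<lambda>y. a y * D (i # \<alpha>) (x - y))" for i by (rule int)
      show "integrable lborel (\<lambda>y. norm (a y))" using a by simp
      fix h y :: "real^'n"
      have "a y * D \<alpha> (x + h - y) - a y * D \<alpha> (x - y) - (\<Sum>i\<in>UNIV. h $ i *\<^sub>R (a y * D (i # \<alpha>) (x - y)))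
          = a y * (D \<alpha> ((x - y) + h) - D \<alpha> (x - y) - (\<Sum>i\<in>UNIV. h $ i *\<^sub>R D (i # \<alpha>) (x - y)))"
        by (simp add: algebra_simps scaleR_conv_of_real sum_distrib_left)
      also have "norm \<dots> \<le> norm (a y) * ((\<Sum>i\<in>UNIV. \<Sum>j\<in>UNIV. Bf (j#i#\<alpha>)) * norm h ^ 2)"
        unfolding norm_mult by (rule mult_left_mono[OF pf_taylor[OF pf B]]) simp
      finally show "norm (a y * D \<alpha> (x + h - y) - a y * D \<alpha> (x - y) - (\<Sum>i\<in>UNIV. h $ i *\<^sub>R (a y * D (i # \<alpha>) (x - y))))
          \<le> (\<Sum>i\<in>UNIV. \<Sum>j\<in>UNIV. Bf (j#i#\<alpha>)) * norm h ^ 2 * norm (a y)" by (simp add: mult_ac)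
    qed
  qed
qed

lemma cis_meas[measurable]: "cis \<in> borel_measurable borel"
  by (intro borel_measurable_continuous_onI continuous_intros)

lemma prod_integrable:
  fixes a b :: "real^'n::finite \<Rightarrow> complex" and s :: "real^'n \<Rightarrow> real^'n"
  assumes a: "integrable lborel a" and [measurable]: "a \<in> borel_measurable borel"
    and b: "integrable lborel b" and [measurable]: "b \<in> borel_measurable borel"
    and [measurable]: "s \<in> borel_measurable borel"
    and E[measurable]: "(\<lambda>(y,x). E y x) \<in> borel_measurable (lborel \<Otimes>\<^sub>M lborel)"
    and E1: "\<And>y x. norm (E y x) \<le> 1"
  shows "integrable (lborel \<Otimes>\<^sub>M lborel) (\<lambda>(y,x). a y * b (x - s y) * E y x)"
proof (rule lborel_pair.Fubini_integrable)
  show "(\<lambda>(y,x). a y * b (x - s y) * E y x) \<in> borel_measurable (lborel \<Otimes>\<^sub>M lborel)" by measurable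
  have bt: "integrable lborel (\<lambda>x. b (x - s y))" for y
    using lborel_transl(2)[of b "- s y"] b by simp
  have bn: "(\<integral>x. norm (b (x - s y)) \<partial>lborel) = (\<integral>x. norm (b x) \<partial>lborel)" for y
    using lborel_transl(1)[of "\<lambda>x. norm (b x)" "- s y"] by simp
  have i2: "integrable lborel (\<lambda>x. a y * b (x - s y) * E y x)" for y
  proof -
    have "(\<lambda>x. E y x) \<in> borel_measurable lborel" using E by measurable
    hence "integrable lborel (\<lambda>x. (a y * b (x - s y)) * E y x)"
      by (intro integrable_mult_bounded[OF _ _ E1]) (use bt in auto)
    thus ?thesis by simp
  qed
  show "AE y in lborel. integrable lborel (\<lambda>x. (\<lambda>(y,x). a y * b (x - s y) * E y x) (y, x))"
    using i2 by simp
  show "integrable lborel (\<lambda>y. \<integral>x. norm ((\<lambda>(y,x). a y * b (x - s y) * E y x) (y, x)) \<partial>lborel)"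
  proof (rule Bochner_Integration.integrable_bound[where f="\<lambda>y. norm (a y) * (\<integral>x. norm (b x) \<partial>lborel)"])
    show "integrable lborel (\<lambda>y. norm (a y) * (\<integral>x. norm (b x) \<partial>lborel))" using a by simp
    show "(\<lambda>y. \<integral>x. norm ((\<lambda>(y,x). a y * b (x - s y) * E y x) (y, x)) \<partial>lborel) \<in> borel_measurable lborel"
      by measurable
    show "AE y in lborel. norm (\<integral>x. norm ((\<lambda>(y,x). a y * b (x - s y) * E y x) (y, x)) \<partial>lborel)
       \<le> norm (norm (a y) * (\<integral>x. norm (b x) \<partial>lborel))"
    proof (intro AE_I2)
      fix y
      have "(\<integral>x. norm (a y * b (x - s y) * E y x) \<partial>lborel) \<le> (\<integral>x. norm (a y) * norm (b (x - s y)) \<partial>lborel)"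
        by (rule integral_mono[OF integrable_norm[OF i2]]) (use bt E1 in \<open>auto simp: norm_mult intro: mult_left_le\<close>)
      also have "\<dots> = norm (a y) * (\<integral>x. norm (b x) \<partial>lborel)" by (simp add: bn)
      finally show "norm (\<integral>x. norm ((\<lambda>(y,x). a y * b (x - s y) * E y x) (y, x)) \<partial>lborel)
       \<le> norm (norm (a y) * (\<integral>x. norm (b x) \<partial>lborel))"
        by (simp add: integral_nonneg_AE)
    qed
  qed
qed


lemma conv_props:
  fixes a b :: "real^'n::finite \<Rightarrow> complex"
  assumes a: "integrable lborel a" and [measurable]: "a \<in> borel_measurable borel"
    and b: "integrable lborel b" and [measurable]: "b \<in> borel_measurable borel"
  shows "integrable lborel (conv a b)" "conv a b \<in> borel_measurable borel"
proof -
  have "integrable (lborel \<Otimes>\<^sub>M lborel) (\<lambda>(y,x). a y * b (x - (\<lambda>y. y) y) * (\<lambda>y x. 1) y x)"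
    by (rule prod_integrable[OF a _ b]) auto
  hence "integrable lborel (\<lambda>x. \<integral>y. a y * b (x - y) \<partial>lborel)"
    using lborel_pair.integrable_snd[of "\<lambda>y x. a y * b (x - y)"] by simp
  moreover have "conv a b = (\<lambda>x. \<integral>y. a y * b (x - y) \<partial>lborel)"
    by (rule ext, rule conv_lborel) auto
  ultimately show i: "integrable lborel (conv a b)" by simp
  thus "conv a b \<in> borel_measurable borel" using borel_measurable_integrable by fastforce
qed

lemma conv_thm:
  fixes a b :: "real^'n::finite \<Rightarrow> complex"
  assumes a: "integrable lborel a" and [measurable]: "a \<in> borel_measurable borel"
    and b: "integrable lborel b" and [measurable]: "b \<in> borel_measurable borel"
  shows "fourier (conv a b) \<xi> = fourier a \<xi> * fourier b \<xi>"
proof -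
  let ?E = "\<lambda>x::real^'n. cis (- 2 * pi * (x \<bullet> \<xi>))"
  have cb[measurable]: "conv a b \<in> borel_measurable borel" by (rule conv_props(2)[OF a _ b]) auto
  have I: "integrable (lborel \<Otimes>\<^sub>M lborel) (\<lambda>(y,x). a y * b (x - (\<lambda>y. y) y) * (\<lambda>y x. ?E x) y x)"
    by (rule prod_integrable[OF a _ b]) auto
  have inner: "(\<integral>x. a y * b (x - y) * ?E x \<partial>lborel) = a y * ?E y * fourier b \<xi>" for y
  proof -
    let ?G = "\<lambda>x. b (x - y) * ?E x"
    have "(\<integral>x. ?G x \<partial>lborel) = (\<integral>x. ?G (y + x) \<partial>lborel)"
      by (rule lborel_transl(1)[symmetric]) measurable
    also have "\<dots> = (\<integral>x. ?E y * (b x * ?E x) \<partial>lborel)"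
    proof (rule Bochner_Integration.integral_cong)
      fix x :: "real^'n"
      have "?E (y + x) = ?E y * ?E x" unfolding cis_mult by (simp add: inner_add_left algebra_simps)
      thus "?G (y + x) = ?E y * (b x * ?E x)" by simp
    qed simp
    also have "\<dots> = ?E y * fourier b \<xi>" by (simp add: fourier_lborel)
    finally show ?thesis by (simp add: mult.assoc)
  qed
  have "fourier (conv a b) \<xi> = (\<integral>x. (\<integral>y. a y * b (x - y) \<partial>lborel) * ?E x \<partial>lborel)"
    by (simp add: fourier_lborel conv_lborel)
  also have "\<dots> = (\<integral>x. (\<integral>y. a y * b (x - y) * ?E x \<partial>lborel) \<partial>lborel)" by simp
  also have "\<dots> = (\<integral>y. (\<integral>x. a y * b (x - y) * ?E x \<partial>lborel) \<partial>lborel)"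
    using lborel_pair.Fubini_integral[of "\<lambda>y x. a y * b (x - y) * ?E x"] I by simp
  also have "\<dots> = (\<integral>y. a y * ?E y * fourier b \<xi> \<partial>lborel)" by (simp only: inner)
  also have "\<dots> = fourier a \<xi> * fourier b \<xi>" by (simp add: fourier_lborel)
  finally show ?thesis .
qed


lemma fourier_borel:
  fixes a :: "real^'n::finite \<Rightarrow> complex"
  assumes a: "integrable lborel a" and [measurable]: "a \<in> borel_measurable borel"
  shows "continuous_on UNIV (fourier a)" "fourier a \<in> borel_measurable borel"
proof -
  have "integrable lebesgue a" using a int_leb_borel(2)[of a] by simp
  thus c: "continuous_on UNIV (fourier a)" by (rule fourier_continuous)
  thus "fourier a \<in> borel_measurable borel" by (rule borel_measurable_continuous_onI)
qed

lemma FL: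
  fixes a b :: "real^'n::finite \<Rightarrow> complex"
  assumes a: "integrable lborel a" and [measurable]: "a \<in> borel_measurable borel"
    and b: "integrable lborel b" and [measurable]: "b \<in> borel_measurable borel"
    and even: "\<And>x. b (- x) = b x"
  shows "fourier (\<lambda>x. a x * fourier b x) \<xi> = conv (fourier a) b \<xi>"
proof -
  let ?E = "\<lambda>x::real^'n. cis (- 2 * pi * (x \<bullet> \<xi>))"
  have Fa[measurable]: "fourier a \<in> borel_measurable borel" by (rule fourier_borel(2)[OF a]) simp
  have Fb[measurable]: "fourier b \<in> borel_measurable borel" by (rule fourier_borel(2)[OF b]) simp
  have I: "integrable (lborel \<Otimes>\<^sub>M lborel) (\<lambda>(x,y). a x * b (y - (\<lambda>_. 0) x) * (\<lambda>x y. cis (- 2 * pi * (y \<bullet> x)) * ?E x) x y)"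
    by (rule prod_integrable[OF a _ b]) (auto simp: norm_mult)
  have inner: "(\<integral>x. a x * b y * (cis (- 2 * pi * (y \<bullet> x)) * ?E x) \<partial>lborel) = b y * fourier a (y + \<xi>)" for y
  proof -
    have "(\<integral>x. a x * b y * (cis (- 2 * pi * (y \<bullet> x)) * ?E x) \<partial>lborel) = (\<integral>x. b y * (a x * cis (- 2 * pi * (x \<bullet> (y + \<xi>)))) \<partial>lborel)"
    proof (rule Bochner_Integration.integral_cong)
      fix x :: "real^'n"
      have "cis (- 2 * pi * (y \<bullet> x)) * ?E x = cis (- 2 * pi * (x \<bullet> (y + \<xi>)))"
        unfolding cis_mult by (simp add: inner_add_right inner_commute algebra_simps)
      thus "a x * b y * (cis (- 2 * pi * (y \<bullet> x)) * ?E x) = b y * (a x * cis (- 2 * pi * (x \<bullet> (y + \<xi>))))"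
        by (simp add: mult_ac)
    qed simp
    also have "\<dots> = b y * fourier a (y + \<xi>)" by (simp add: fourier_lborel)
    finally show ?thesis .
  qed
  have "fourier (\<lambda>x. a x * fourier b x) \<xi> = (\<integral>x. (a x * (\<integral>y. b y * cis (- 2 * pi * (y \<bullet> x)) \<partial>lborel)) * ?E x \<partial>lborel)"
    by (simp add: fourier_lborel)
  also have "\<dots> = (\<integral>x. (\<integral>y. a x * b y * (cis (- 2 * pi * (y \<bullet> x)) * ?E x) \<partial>lborel) \<partial>lborel)"
  proof (rule Bochner_Integration.integral_cong[OF refl])
    fix x :: "real^'n"
    have "(\<integral>y. a x * b y * (cis (- 2 * pi * (y \<bullet> x)) * ?E x) \<partial>lborel) = (\<integral>y. (a x * ?E x) * (b y * cis (- 2 * pi * (y \<bullet> x))) \<partial>lborel)"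
      by (rule Bochner_Integration.integral_cong) (simp_all add: mult_ac)
    also have "\<dots> = (a x * ?E x) * (\<integral>y. b y * cis (- 2 * pi * (y \<bullet> x)) \<partial>lborel)"
      by (rule integral_mult_right_zero)
    finally show "(a x * (\<integral>y. b y * cis (- 2 * pi * (y \<bullet> x)) \<partial>lborel)) * ?E x = (\<integral>y. a x * b y * (cis (- 2 * pi * (y \<bullet> x)) * ?E x) \<partial>lborel)"
      by (metis (no_types) mult.assoc mult.commute)
  qed
  also have "\<dots> = (\<integral>y. (\<integral>x. a x * b y * (cis (- 2 * pi * (y \<bullet> x)) * ?E x) \<partial>lborel) \<partial>lborel)"
    using lborel_pair.Fubini_integral[of "\<lambda>x y. a x * b y * (cis (- 2 * pi * (y \<bullet> x)) * ?E x)"] I by simp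
  also have "\<dots> = (\<integral>y. b y * fourier a (y + \<xi>) \<partial>lborel)" by (simp only: inner)
  also have "\<dots> = (\<integral>y. b (- y) * fourier a (- y + \<xi>) \<partial>lborel)"
    by (rule lborel_refl(1)[symmetric]) measurable
  also have "\<dots> = (\<integral>y. (\<lambda>w. fourier a w * b (\<xi> - w)) (\<xi> - y) \<partial>lborel)"
    by (simp add: even mult.commute)
  also have "\<dots> = (\<integral>w. fourier a w * b (\<xi> - w) \<partial>lborel)"
    by (rule lborel_flip(1)) measurable
  also have "\<dots> = conv (fourier a) b \<xi>" by (simp add: conv_lborel)
  finally show ?thesis .
qed

locale bump =
  fixes ps :: "real^'n::finite \<Rightarrow> real" and d :: real
  assumes d: "d > 0" and nn: "\<And>x. ps x \<ge> 0" and ev: "\<And>x. ps (- x) = ps x"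
    and sm: "smooth_fun ps" and supp: "\<And>x. ps x \<noteq> 0 \<Longrightarrow> norm x < d"
    and L1: "(\<integral>x. \<bar>ps x\<bar> \<partial>lebesgue) = 1"
begin

definition "psc = (\<lambda>x. complex_of_real (ps x))"
definition "phi = conv psc psc"
definition "phir = (\<lambda>x. \<integral>y. ps y * ps (x - y) \<partial>lborel)"

lemma ps_cont: "continuous_on UNIV ps"
proof -
  obtain D where "partials_family ps D" using sm unfolding smooth_fun_def by blast
  thus ?thesis using pf_cont[of ps D "[]"] by (simp add: partials_family_def)
qed

lemma ps_borel[measurable]: "ps \<in> borel_measurable borel"
  by (rule borel_measurable_continuous_onI[OF ps_cont])

lemma ps_zero: "d \<le> norm x \<Longrightarrow> ps x = 0"
  using supp by force

lemma ps_int: "integrable lborel ps"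
  by (rule csupp_integrable[OF ps_cont, of d]) (use ps_zero in auto)

lemma ps_one: "(\<integral>x. ps x \<partial>lborel) = 1"
  using L1 nn int_leb_borel(1)[OF ps_borel] by simp

lemma psc_testf: "testf psc"
proof -
  have z: "\<forall>x. d \<le> norm x \<longrightarrow> psc x = 0" using ps_zero by (simp add: psc_def)
  obtain D where pf: "partials_family ps D" using sm unfolding smooth_fun_def by blast
  have "partials_family psc (\<lambda>\<alpha> x. complex_of_real (D \<alpha> x))"
    unfolding partials_family_def
  proof (intro conjI allI)
    show "(\<lambda>x. complex_of_real (D [] x)) = psc" using pf by (simp add: partials_family_def psc_def)
    fix \<alpha> x
    show "((\<lambda>x. complex_of_real (D \<alpha> x)) has_derivative (\<lambda>v. \<Sum>i\<in>UNIV. v $ i *\<^sub>R complex_of_real (D (i # \<alpha>) x))) (at x)"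
      using has_derivative_of_real[OF pf_deriv[OF pf, of \<alpha> x]]
      by (simp add: scaleR_conv_of_real)
  qed
  thus ?thesis using z unfolding testf_def smooth_fun_def by blast
qed

lemma psc_borel[measurable]: "psc \<in> borel_measurable borel" unfolding psc_def by measurable
lemma psc_int: "integrable lborel psc" unfolding psc_def using ps_int by simp

lemma phi_eq: "phi x = complex_of_real (phir x)"
  unfolding phi_def phir_def by (simp add: conv_lborel psc_def of_real_mult[symmetric] del: of_real_mult)

lemma phir_nn: "phir x \<ge> 0"
  unfolding phir_def by (rule integral_nonneg_AE) (simp add: nn)

lemma phir_supp: "phir x \<noteq> 0 \<Longrightarrow> norm x < 2 * d"
proof (rule ccontr)
  assume "phir x \<noteq> 0" "\<not> norm x < 2 * d"
  have "ps y * ps (x - y) = 0" for y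
  proof (cases "norm y < d")
    case True
    hence "d \<le> norm (x - y)" using \<open>\<not> norm x < 2 * d\<close> norm_triangle_ineq2[of x y] by simp
    thus ?thesis using ps_zero by simp
  qed (simp add: ps_zero)
  hence "(\<lambda>y. ps y * ps (x - y)) = (\<lambda>y. 0)" by auto
  hence "phir x = 0" by (simp add: phir_def)
  with \<open>phir x \<noteq> 0\<close> show False by simp
qed

lemma phir_ev: "phir (- x) = phir x"
proof -
  have "phir (- x) = (\<integral>y. ps (- y) * ps (- x - (- y)) \<partial>lborel)"
    unfolding phir_def by (rule lborel_refl(1)[symmetric]) measurable
  also have "\<dots> = phir x" unfolding phir_def
    by (rule Bochner_Integration.integral_cong) (auto simp: ev[of "x - _", symmetric] ev)
  finally show ?thesis .
qed

lemma phi_ev: "phi (- x) = phi x" by (simp add: phi_eq phir_ev)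

lemma phi_testf: "testf phi"
proof -
  obtain D R Bf where pf: "partials_family psc D" and cD: "\<And>\<alpha>. continuous_on UNIV (D \<alpha>)"
    and zD: "\<And>\<alpha> x. R < norm x \<Longrightarrow> D \<alpha> x = 0" and B: "\<And>\<beta> x. norm (D \<beta> x) \<le> Bf \<beta>"
    using testf_fam[OF psc_testf] by metis
  have "partials_family phi (\<lambda>\<alpha>. conv psc (D \<alpha>))"
    unfolding phi_def by (rule conv_testf_deriv(1)[OF psc_int psc_borel pf cD B])
  moreover have "\<forall>x. 2 * d \<le> norm x \<longrightarrow> phi x = 0" using phir_supp by (force simp: phi_eq)
  ultimately show ?thesis unfolding testf_def smooth_fun_def by blast
qed

lemma phi_int: "integrable lborel phi" by (rule ccs_integrable[OF testf_ccs[OF phi_testf]])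
lemma phi_borel[measurable]: "phi \<in> borel_measurable borel" by (rule ccs_borel[OF testf_ccs[OF phi_testf]])

lemma phir_int: "integrable lborel phir"
proof -
  have "integrable lborel (\<lambda>x. Re (phi x))" using phi_int by auto
  thus ?thesis by (simp add: phi_eq)
qed
lemma phir_borel[measurable]: "phir \<in> borel_measurable borel"
proof -
  have "(\<lambda>x. Re (phi x)) \<in> borel_measurable borel" by measurable
  thus ?thesis by (simp add: phi_eq)
qed

definition "Cps \<xi> = (\<integral>x. ps x * cos (2 * pi * (x \<bullet> \<xi>)) \<partial>lborel)"

lemma fourier_psc: "fourier psc \<xi> = complex_of_real (Cps \<xi>)"
proof -
  let ?I = "fourier psc \<xi>"
  have I1: "?I = (\<integral>x. complex_of_real (ps x) * cis (- 2 * pi * (x \<bullet> \<xi>)) \<partial>lborel)"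
    by (simp add: fourier_lborel psc_def)
  have I2: "?I = (\<integral>x. complex_of_real (ps x) * cis (2 * pi * (x \<bullet> \<xi>)) \<partial>lborel)"
  proof -
    have "?I = (\<integral>x. complex_of_real (ps (- x)) * cis (- 2 * pi * ((- x) \<bullet> \<xi>)) \<partial>lborel)"
      unfolding I1 by (rule lborel_refl(1)[symmetric]) measurable
    thus ?thesis by (simp add: ev)
  qed
  have int1: "integrable lborel (\<lambda>x. complex_of_real (ps x) * cis (s * (x \<bullet> \<xi>)))" for s
    by (rule integrable_mult_bounded[where B=1]) (auto simp: psc_int[unfolded psc_def])
  have "2 * ?I = (\<integral>x. complex_of_real (ps x) * cis (- 2 * pi * (x \<bullet> \<xi>)) + complex_of_real (ps x) * cis (2 * pi * (x \<bullet> \<xi>)) \<partial>lborel)"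
    using int1[of "- 2 * pi"] int1[of "2 * pi"] I1 I2
    by (simp add: Bochner_Integration.integral_add)
  also have "\<dots> = (\<integral>x. complex_of_real (2 * (ps x * cos (2 * pi * (x \<bullet> \<xi>)))) \<partial>lborel)"
    by (rule Bochner_Integration.integral_cong) (auto simp: cis.ctr complex_eq_iff)
  also have "\<dots> = 2 * complex_of_real (Cps \<xi>)" unfolding Cps_def integral_complex_of_real by simp
  finally show ?thesis by simp
qed

lemma fourier_phi: "fourier phi \<xi> = complex_of_real (Cps \<xi> ^ 2)"
  unfolding phi_def conv_thm[OF psc_int psc_borel psc_int psc_borel]
  by (simp add: fourier_psc power2_eq_square)

lemma phir_one: "(\<integral>x. phir x \<partial>lborel) = 1"
proof -
  have "fourier phi 0 = complex_of_real (\<integral>x. phir x \<partial>lborel)"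
    by (simp add: fourier_lborel phi_eq)
  moreover have "fourier psc 0 = 1" by (simp add: fourier_lborel psc_def ps_one)
  ultimately show ?thesis using fourier_phi[of 0] fourier_psc[of 0] by simp
qed

lemma fourier_phi_bound: "norm (fourier phi y - 1) \<le> 4 * pi * d * norm y"
proof -
  have "fourier phi y - 1 = (\<integral>x. complex_of_real (phir x) * (cis (- 2 * pi * (x \<bullet> y)) - 1) \<partial>lborel)"
  proof -
    have i1: "integrable lborel (\<lambda>x. complex_of_real (phir x) * cis (- 2 * pi * (x \<bullet> y)))"
      by (rule integrable_mult_bounded[where B=1]) (auto simp: phir_int)
    have "fourier phi y - 1 = (\<integral>x. complex_of_real (phir x) * cis (- 2 * pi * (x \<bullet> y)) \<partial>lborel) - (\<integral>x. complex_of_real (phir x) \<partial>lborel)"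
      by (simp add: fourier_lborel phi_eq phir_one)
    also have "\<dots> = (\<integral>x. complex_of_real (phir x) * cis (- 2 * pi * (x \<bullet> y)) - complex_of_real (phir x) \<partial>lborel)"
      using i1 phir_int by (simp add: Bochner_Integration.integral_diff)
    finally show ?thesis by (simp add: algebra_simps)
  qed
  also have "norm \<dots> \<le> (\<integral>x. phir x * (4 * pi * d * norm y) \<partial>lborel)"
  proof (rule Bochner_Integration.integral_norm_bound_integral)
    show "integrable lborel (\<lambda>x. complex_of_real (phir x) * (cis (- 2 * pi * (x \<bullet> y)) - 1))"
      by (rule integrable_mult_bounded[where B=2]) (auto simp: phir_int intro: order_trans[OF norm_triangle_ineq4])
    show "integrable lborel (\<lambda>x. phir x * (4 * pi * d * norm y))" using phir_int by simp
    fix x :: "real^'n"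
    show "norm (complex_of_real (phir x) * (cis (- 2 * pi * (x \<bullet> y)) - 1)) \<le> phir x * (4 * pi * d * norm y)"
    proof (cases "phir x = 0")
      case False
      hence nx: "norm x < 2 * d" by (rule phir_supp)
      have "norm (cis (- 2 * pi * (x \<bullet> y)) - 1) \<le> \<bar>- 2 * pi * (x \<bullet> y)\<bar>" by (rule cis_minus_one_bound)
      also have "\<dots> = 2 * pi * \<bar>x \<bullet> y\<bar>" by (simp add: abs_mult)
      also have "\<dots> \<le> 2 * pi * (norm x * norm y)" by (simp add: Cauchy_Schwarz_ineq2)
      also have "\<dots> \<le> 2 * pi * (2 * d * norm y)"
        using mult_right_mono[OF less_imp_le[OF nx] norm_ge_zero[of y]] by simp
      finally have "norm (cis (- 2 * pi * (x \<bullet> y)) - 1) \<le> 4 * pi * d * norm y" by simp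
      hence "phir x * norm (cis (- 2 * pi * (x \<bullet> y)) - 1) \<le> phir x * (4 * pi * d * norm y)"
        by (rule mult_left_mono) (rule phir_nn)
      thus ?thesis using phir_nn[of x] by (simp add: norm_mult)
    qed simp
  qed
  also have "\<dots> = 4 * pi * d * norm y" by (simp add: phir_one)
  finally show ?thesis .
qed

end

lemma ftilde_facts:
  fixes f :: "real^'n::finite \<Rightarrow> real"
  assumes fA: "f \<in> A_tilde"
  shows "continuous_on UNIV f" "integrable lborel f" "f \<in> borel_measurable borel"
    "\<And>\<xi>. fourier (\<lambda>x. complex_of_real (f x)) \<xi> = complex_of_real (f \<xi>)" "f 0 < 0"
    "\<And>x. \<bar>f x\<bar> \<le> (\<integral>x. \<bar>f x\<bar> \<partial>lborel)"
    "\<And>y. rad f < norm y \<Longrightarrow> 0 \<le> f y" "0 \<le> rad f"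
proof -
  have il: "integrable lebesgue f" and fF: "\<And>\<xi>. fourier (\<lambda>x. complex_of_real (f x)) \<xi> = complex_of_real (f \<xi>)"
    and f0: "f 0 < 0" and en: "eventually_nonneg f"
    using fA unfolding A_tilde_def A_plus_def by auto
  show "\<And>\<xi>. fourier (\<lambda>x. complex_of_real (f x)) \<xi> = complex_of_real (f \<xi>)" by (rule fF)
  show "f 0 < 0" by (rule f0)
  have "continuous_on UNIV (fourier (\<lambda>x. complex_of_real (f x)))"
    by (rule fourier_continuous) (use il in simp)
  hence "continuous_on UNIV (\<lambda>\<xi>. Re (fourier (\<lambda>x. complex_of_real (f x)) \<xi>))" by (intro continuous_intros)
  thus c: "continuous_on UNIV f" by (simp add: fF)
  thus b[measurable]: "f \<in> borel_measurable borel" by (rule borel_measurable_continuous_onI)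
  show il2: "integrable lborel f" using il int_leb_borel(2)[OF b] by simp
  show "\<bar>f x\<bar> \<le> (\<integral>x. \<bar>f x\<bar> \<partial>lborel)" for x
    using fourier_norm_le[of "\<lambda>x. complex_of_real (f x)" x] il2 by (simp add: fF)
  let ?S = "{r. r > 0 \<and> (\<forall>x. norm x \<ge> r \<longrightarrow> f x \<ge> 0)}"
  obtain R where R: "\<And>x. norm x \<ge> R \<Longrightarrow> f x \<ge> 0" using en unfolding eventually_nonneg_def by blast
  have ne: "max R 1 \<in> ?S" using R by auto
  have bdd: "bdd_below ?S" by (rule bdd_belowI[of _ 0]) auto
  show "rad f < norm y \<Longrightarrow> 0 \<le> f y" for y
  proof -
    assume "rad f < norm y"
    then obtain r where "r \<in> ?S" "r < norm y"
      unfolding rad_def using cInf_less_iff[OF _ bdd, of "norm y"] ne by blast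
    thus "0 \<le> f y" by auto
  qed
  show "0 \<le> rad f" unfolding rad_def by (rule cInf_greatest) (use ne in auto)
qed

locale main = bump ps d for ps :: "real^'n::finite \<Rightarrow> real" and d +
  fixes f :: "real^'n \<Rightarrow> real"
  assumes fA: "f \<in> A_tilde"
begin

definition "F = (\<lambda>x. complex_of_real (f x))"
definition "g = conv F phi"
definition "h = (\<lambda>x. conv (fourier g) phi x + g x * fourier phi x)"
definition "Mf = (\<integral>x. \<bar>f x\<bar> \<partial>lborel)"

lemma f_borel[measurable]: "f \<in> borel_measurable borel" using ftilde_facts(3)[OF fA] .
lemma f_int: "integrable lborel f" using ftilde_facts(2)[OF fA] .
lemma F_borel[measurable]: "F \<in> borel_measurable borel" unfolding F_def by measurable
lemma F_int: "integrable lborel F" unfolding F_def using f_int by simp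
lemma F_hat: "fourier F = F" using ftilde_facts(4)[OF fA] by (auto simp: F_def)
lemma f_bound: "\<bar>f x\<bar> \<le> Mf" unfolding Mf_def by (rule ftilde_facts(6)[OF fA])

lemma Fphi_borel[measurable]: "fourier phi \<in> borel_measurable borel"
  by (rule fourier_borel(2)[OF phi_int phi_borel])

lemma Mf_nn: "0 \<le> Mf" unfolding Mf_def by simp

lemma Fphi_lborel: "fourier phi \<in> borel_measurable lborel" by simp

lemma Fphi_bound: "norm (fourier phi x) \<le> 1"
proof -
  have "norm (fourier phi x) \<le> (\<integral>x. norm (phi x) \<partial>lborel)" by (rule fourier_norm_le[OF phi_borel phi_int])
  also have "\<dots> = 1" using phir_one phir_nn by (simp add: phi_eq)
  finally show ?thesis .
qed

lemma g_int: "integrable lborel g" and g_borel[measurable]: "g \<in> borel_measurable borel"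
  unfolding g_def by (rule conv_props[OF F_int F_borel phi_int phi_borel])+

lemma ghat: "fourier g \<xi> = F \<xi> * fourier phi \<xi>"
  unfolding g_def conv_thm[OF F_int F_borel phi_int phi_borel] by (simp add: F_hat)

lemma ghat_fun: "fourier g = (\<lambda>\<xi>. F \<xi> * fourier phi \<xi>)" using ghat by auto

lemma ghat_int: "integrable lborel (fourier g)" unfolding ghat_fun
  by (rule integrable_mult_bounded[OF F_int Fphi_lborel Fphi_bound])

lemma ghat_borel[measurable]: "fourier g \<in> borel_measurable borel" unfolding ghat_fun by measurable

lemma h_real: "h x = complex_of_real ((\<integral>y. f y * Cps y ^ 2 * phir (x - y) \<partial>lborel) + (\<integral>y. f y * phir (x - y) \<partial>lborel) * Cps x ^ 2)"
proof -
  have "conv (fourier g) phi x = complex_of_real (\<integral>y. f y * Cps y ^ 2 * phir (x - y) \<partial>lborel)"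
    by (simp add: conv_lborel ghat F_def fourier_phi phi_eq of_real_mult[symmetric] of_real_power[symmetric] del: of_real_mult of_real_power)
  moreover have "g x = complex_of_real (\<integral>y. f y * phir (x - y) \<partial>lborel)"
    by (simp add: g_def conv_lborel F_def phi_eq of_real_mult[symmetric] del: of_real_mult)
  ultimately show ?thesis by (simp add: h_def fourier_phi)
qed

lemma h_Im: "Im (h x) = 0" by (simp add: h_real)

lemma h_fourier: "fourier h = h"
proof
  fix \<xi>
  have i1: "integrable lborel (conv (fourier g) phi)" and b1: "conv (fourier g) phi \<in> borel_measurable borel"
    by (rule conv_props[OF ghat_int ghat_borel phi_int phi_borel])+
  have i2: "integrable lborel (\<lambda>x. g x * fourier phi x)"
    by (rule integrable_mult_bounded[OF g_int Fphi_lborel Fphi_bound])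
  have b2: "(\<lambda>x. g x * fourier phi x) \<in> borel_measurable borel" by measurable
  have "fourier h \<xi> = fourier (conv (fourier g) phi) \<xi> + fourier (\<lambda>x. g x * fourier phi x) \<xi>"
  proof -
    have bh: "h \<in> borel_measurable borel" unfolding h_def using b1 b2 by measurable
    have ii1: "integrable lborel (\<lambda>x. conv (fourier g) phi x * cis (- 2 * pi * (x \<bullet> \<xi>)))"
      by (rule integrable_mult_bounded[where B=1]) (auto simp: i1 b1)
    have ii2: "integrable lborel (\<lambda>x. g x * fourier phi x * cis (- 2 * pi * (x \<bullet> \<xi>)))"
      by (rule integrable_mult_bounded[where B=1]) (auto simp: i2)
    show ?thesis
      unfolding fourier_lborel[OF bh] fourier_lborel[OF b1] fourier_lborel[OF b2]
      using ii1 ii2 by (simp add: h_def distrib_right Bochner_Integration.integral_add)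
  qed
  also have "fourier (conv (fourier g) phi) \<xi> = fourier (fourier g) \<xi> * fourier phi \<xi>"
    by (rule conv_thm[OF ghat_int ghat_borel phi_int phi_borel])
  also have "fourier (fourier g) \<xi> = g \<xi>"
  proof -
    have "fourier (fourier g) \<xi> = fourier (\<lambda>x. F x * fourier phi x) \<xi>" by (simp add: ghat_fun)
    also have "\<dots> = conv (fourier F) phi \<xi>" by (rule FL[OF F_int F_borel phi_int phi_borel phi_ev])
    also have "\<dots> = g \<xi>" by (simp add: F_hat g_def)
    finally show ?thesis .
  qed
  also have "fourier (\<lambda>x. g x * fourier phi x) \<xi> = conv (fourier g) phi \<xi>"
    by (rule FL[OF g_int g_borel phi_int phi_borel phi_ev])
  finally show "fourier h \<xi> = h \<xi>" by (simp add: h_def)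
qed

lemma sum_list_bound:
  assumes "\<And>p. p \<in> set xs \<Longrightarrow> c * norm (A p) \<le> B p" and "0 \<le> c"
  shows "c * norm (sum_list (map A xs) :: 'b::real_normed_vector) \<le> sum_list (map B xs)"
  using assms
proof (induction xs)
  case (Cons p xs)
  have "c * norm (A p + sum_list (map A xs)) \<le> c * norm (A p) + c * norm (sum_list (map A xs))"
    using Cons.prems(2) by (simp add: mult_left_mono norm_triangle_ineq distrib_left[symmetric])
  also have "\<dots> \<le> B p + sum_list (map B xs)" using Cons by (intro add_mono) auto
  finally show ?case by simp
qed simp

lemma h_schwartz: "schwartz h"
proof -
  obtain D R0 Bf where pf: "partials_family phi D" and cD: "\<And>\<alpha>. continuous_on UNIV (D \<alpha>)"
    and zD0: "\<And>\<alpha> x. R0 < norm x \<Longrightarrow> D \<alpha> x = 0" and B: "\<And>\<beta> x. norm (D \<beta> x) \<le> Bf \<beta>"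
    using testf_fam[OF phi_testf] by metis
  define R where "R = max R0 0"
  have R0: "0 \<le> R" by (simp add: R_def)
  have zD: "\<And>\<alpha> x. R < norm x \<Longrightarrow> D \<alpha> x = 0" using zD0 by (simp add: R_def)
  have ccsD: "ccs (D \<alpha>)" for \<alpha> using cD zD unfolding ccs_def by blast
  let ?D1 = "\<lambda>\<alpha>. conv (fourier g) (D \<alpha>)"
  let ?Dg = "\<lambda>\<alpha>. conv F (D \<alpha>)"
  let ?Dp = "\<lambda>\<beta>. fourier (mpoly \<beta> phi)"
  have pf1: "partials_family (conv (fourier g) phi) ?D1"
    by (rule conv_testf_deriv(1)[OF ghat_int ghat_borel pf cD B])
  have pfg: "partials_family g ?Dg" unfolding g_def
    by (rule conv_testf_deriv(1)[OF F_int F_borel pf cD B])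
  have Dg_bd: "norm (?Dg \<alpha> x) \<le> (\<integral>y. norm (F y) \<partial>lborel) * Bf \<alpha>" for \<alpha> x
    by (rule conv_testf_deriv(2)[OF F_int F_borel pf cD B])
  have pfp: "partials_family (fourier phi) ?Dp" by (rule schwartz_fourier_testf(1)[OF phi_testf])
  have "\<forall>p. \<exists>C. \<forall>x. (1 + norm x) ^ (snd p) * norm (?Dp (fst p) x) \<le> C"
    using schwartz_fourier_testf(2)[OF phi_testf] by blast
  then obtain Cd where Cd: "\<forall>p x. (1 + norm x) ^ (snd p) * norm (?Dp (fst p) x) \<le> Cd p"
    using choice[of "\<lambda>p C. \<forall>x. (1 + norm x) ^ (snd p) * norm (?Dp (fst p) x) \<le> C"] by blast
  have Cd': "(1 + norm x) ^ k * norm (?Dp \<beta> x) \<le> Cd (\<beta>, k)" for x k \<beta>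
  proof -
    from Cd have "(1 + norm x) ^ (snd (\<beta>, k)) * norm (?Dp (fst (\<beta>, k)) x) \<le> Cd (\<beta>, k)" by blast
    thus ?thesis by simp
  qed
  have pfh: "partials_family h (\<lambda>\<alpha> x. ?D1 \<alpha> x + prodfam ?Dg ?Dp \<alpha> x)"
    unfolding h_def by (rule pf_add[OF pf1 pf_mult[OF pfg pfp]])
  have MF: "norm (F y) \<le> Mf" for y using f_bound by (simp add: F_def)
  have dec1: "\<exists>C. \<forall>x. (1 + norm x) ^ k * norm (?D1 \<alpha> x) \<le> C" for \<alpha> k
  proof -
    define K where "K = (1 + R) ^ k * (Mf * Cd ([], k))"
    have gb: "(1 + norm y) ^ k * norm (fourier g y) \<le> Mf * Cd ([], k)" for y
    proof -
      have "(1 + norm y) ^ k * norm (fourier g y) = norm (F y) * ((1 + norm y) ^ k * norm (fourier phi y))"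
        by (simp add: ghat norm_mult mult_ac)
      also have "\<dots> \<le> Mf * Cd ([], k)"
        using Cd'[of y k "[]"] MF[of y] Mf_nn by (intro mult_mono) auto
      finally show ?thesis .
    qed
    show ?thesis
    proof (intro exI allI)
      fix x :: "real^'n"
      have ib: "integrable lborel (\<lambda>y. K * norm (D \<alpha> (x - y)))"
        using lborel_flip(2)[of "\<lambda>y. norm (D \<alpha> y)" x] ccs_integrable[OF ccsD[of \<alpha>]] ccs_borel[OF ccsD[of \<alpha>]]
        by simp
      have ii: "integrable lborel (\<lambda>y. fourier g y * D \<alpha> (x - y))"
        by (rule integrable_mult_bounded[OF ghat_int _ B]) (use ccs_borel[OF ccsD[of \<alpha>]] in measurable)
      have "(1 + norm x) ^ k * norm (?D1 \<alpha> x) = norm (\<integral>y. (1 + norm x) ^ k *\<^sub>R (fourier g y * D \<alpha> (x - y)) \<partial>lborel)"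
        using ccs_borel[OF ccsD[of \<alpha>]] by (simp add: conv_lborel)
      also have "\<dots> \<le> (\<integral>y. K * norm (D \<alpha> (x - y)) \<partial>lborel)"
      proof (rule Bochner_Integration.integral_norm_bound_integral[OF _ ib])
        show "integrable lborel (\<lambda>y. (1 + norm x) ^ k *\<^sub>R (fourier g y * D \<alpha> (x - y)))"
          using ii by simp
        fix y :: "real^'n"
        show "norm ((1 + norm x) ^ k *\<^sub>R (fourier g y * D \<alpha> (x - y))) \<le> K * norm (D \<alpha> (x - y))"
        proof (cases "D \<alpha> (x - y) = 0")
          case False
          hence "norm (x - y) \<le> R" using zD by force
          hence "1 + norm x \<le> (1 + R) * (1 + norm y)"
          proof -
            assume a: "norm (x - y) \<le> R"
            have e: "(1 + R) * (1 + norm y) = 1 + norm y + R + R * norm y" by (simp add: algebra_simps)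
            have "0 \<le> R * norm y" using R0 by simp
            thus ?thesis using a norm_triangle_ineq2[of x y] unfolding e by linarith
          qed
          hence "(1 + norm x) ^ k \<le> ((1 + R) * (1 + norm y)) ^ k" by (rule power_mono) simp
          hence "(1 + norm x) ^ k * norm (fourier g y) \<le> (1 + R) ^ k * ((1 + norm y) ^ k * norm (fourier g y))"
            unfolding mult.assoc[symmetric] power_mult_distrib[symmetric] by (rule mult_right_mono) simp_all
          also have "\<dots> \<le> K" unfolding K_def using gb[of y] R0 by (intro mult_left_mono) auto
          finally show ?thesis by (simp add: norm_mult mult_right_mono mult.assoc[symmetric])
        qed simp
      qed
      also have "\<dots> = K * (\<integral>y. norm (D \<alpha> y) \<partial>lborel)"
        using lborel_flip(1)[of "\<lambda>y. norm (D \<alpha> y)" x] ccs_borel[OF ccsD[of \<alpha>]] by simp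
      finally show "(1 + norm x) ^ k * norm (?D1 \<alpha> x) \<le> K * (\<integral>y. norm (D \<alpha> y) \<partial>lborel)" .
    qed
  qed
  have dec2: "\<exists>C. \<forall>x. (1 + norm x) ^ k * norm (prodfam ?Dg ?Dp \<alpha> x) \<le> C" for \<alpha> k
  proof (intro exI allI)
    fix x :: "real^'n"
    show "(1 + norm x) ^ k * norm (prodfam ?Dg ?Dp \<alpha> x) \<le>
       sum_list (map (\<lambda>(p,q). ((\<integral>y. norm (F y) \<partial>lborel) * Bf p) * Cd (q, k)) (splits \<alpha>))"
      unfolding prodfam_def
    proof (rule sum_list_bound)
      fix pq assume "pq \<in> set (splits \<alpha>)"
      obtain p q where pq: "pq = (p, q)" by fastforce
      have "(1 + norm x) ^ k * norm (?Dg p x * ?Dp q x) = norm (?Dg p x) * ((1 + norm x) ^ k * norm (?Dp q x))"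
        by (simp add: norm_mult mult_ac)
      also have "\<dots> \<le> ((\<integral>y. norm (F y) \<partial>lborel) * Bf p) * Cd (q, k)"
        using Dg_bd[of p x] Cd'[of x k q] order_trans[OF norm_ge_zero Dg_bd[of p x]] by (intro mult_mono) auto
      finally show "(1 + norm x) ^ k * norm ((\<lambda>(p, q). ?Dg p x * ?Dp q x) pq) \<le> (\<lambda>(p,q). ((\<integral>y. norm (F y) \<partial>lborel) * Bf p) * Cd (q, k)) pq"
        by (simp add: pq)
    qed simp
  qed
  show ?thesis unfolding schwartz_def
  proof (rule exI[of _ "\<lambda>\<alpha> x. ?D1 \<alpha> x + prodfam ?Dg ?Dp \<alpha> x"], intro conjI allI)
    show "partials_family h (\<lambda>\<alpha> x. ?D1 \<alpha> x + prodfam ?Dg ?Dp \<alpha> x)" by (rule pfh)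
    fix \<alpha> :: "'n list" and k :: nat
    obtain C1 where C1: "\<And>x. (1 + norm x) ^ k * norm (?D1 \<alpha> x) \<le> C1" using dec1 by blast
    obtain C2 where C2: "\<And>x. (1 + norm x) ^ k * norm (prodfam ?Dg ?Dp \<alpha> x) \<le> C2" using dec2 by blast
    show "\<exists>C. \<forall>x. (1 + norm x) ^ k * norm (?D1 \<alpha> x + prodfam ?Dg ?Dp \<alpha> x) \<le> C"
    proof (rule exI[of _ "C1 + C2"], intro allI)
      fix x :: "real^'n"
      have "(1 + norm x) ^ k * norm (?D1 \<alpha> x + prodfam ?Dg ?Dp \<alpha> x)
          \<le> (1 + norm x) ^ k * norm (?D1 \<alpha> x) + (1 + norm x) ^ k * norm (prodfam ?Dg ?Dp \<alpha> x)"
        by (simp add: distrib_left[symmetric] mult_left_mono norm_triangle_ineq)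
      also have "\<dots> \<le> C1 + C2" using C1 C2 by (rule add_mono)
      finally show "(1 + norm x) ^ k * norm (?D1 \<alpha> x + prodfam ?Dg ?Dp \<alpha> x) \<le> C1 + C2" .
    qed
  qed
qed

lemma Cps_bound: "\<bar>Cps y\<bar> \<le> 1"
proof -
  have "norm (fourier psc y) \<le> (\<integral>x. norm (psc x) \<partial>lborel)" by (rule fourier_norm_le[OF psc_borel psc_int])
  also have "\<dots> = 1" using ps_one nn by (simp add: psc_def)
  finally show ?thesis by (simp add: fourier_psc)
qed

lemma Cps0: "Cps 0 = 1" unfolding Cps_def by (simp add: ps_one)

lemma Cps_borel[measurable]: "Cps \<in> borel_measurable borel"
proof -
  have "(\<lambda>y. Re (fourier psc y)) \<in> borel_measurable borel"
    using fourier_borel(2)[OF psc_int psc_borel] by measurable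
  thus ?thesis by (simp add: fourier_psc)
qed

lemma phir_bounded: "\<exists>B. \<forall>x. \<bar>phir x\<bar> \<le> B"
proof -
  obtain B where "\<forall>x. norm (phi x) \<le> B"
    using csupp_bounded testf_ccs[OF phi_testf] unfolding ccs_def by metis
  thus ?thesis by (auto simp: phi_eq)
qed

lemma integrable_mult_bounded_real:
  fixes a :: "'a \<Rightarrow> real"
  assumes a: "integrable M a" and w: "w \<in> borel_measurable M" and B: "\<And>x. \<bar>w x\<bar> \<le> B"
  shows "integrable M (\<lambda>x. a x * w x)"
proof -
  have "integrable M (\<lambda>x. complex_of_real (a x) * complex_of_real (w x))"
    by (rule integrable_mult_bounded[where B=B]) (use a w B in auto)
  from integrable_Re[OF this] show ?thesis by simp
qed

lemma avg_bound:
  assumes G: "\<And>y. norm y < 2 * d \<Longrightarrow> G y \<le> c" and i: "integrable lborel (\<lambda>y. G y * phir (0 - y))"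
  shows "(\<integral>y. G y * phir (0 - y) \<partial>lborel) \<le> c"
proof -
  have "(\<integral>y. G y * phir (0 - y) \<partial>lborel) \<le> (\<integral>y. c * phir (0 - y) \<partial>lborel)"
  proof (rule integral_mono[OF i])
    show "integrable lborel (\<lambda>y. c * phir (0 - y))"
      using lborel_flip(2)[OF phir_borel, of 0] phir_int by simp
    fix y :: "real^'n"
    show "G y * phir (0 - y) \<le> c * phir (0 - y)"
    proof (cases "phir (0 - y) = 0")
      case False
      hence "norm (0 - y) < 2 * d" by (rule phir_supp)
      hence "G y \<le> c" using G by simp
      thus ?thesis by (rule mult_right_mono) (rule phir_nn)
    qed simp
  qed
  also have "\<dots> = c" using lborel_flip(1)[OF phir_borel, of 0] phir_one by simp
  finally show ?thesis .
qed

lemma h0_bound: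
  assumes c1: "\<And>y. norm y < 2 * d \<Longrightarrow> f y * Cps y ^ 2 \<le> c1"
    and c2: "\<And>y. norm y < 2 * d \<Longrightarrow> f y \<le> c2"
  shows "Re (h 0) \<le> c1 + c2"
proof -
  obtain B where B: "\<And>x. \<bar>phir x\<bar> \<le> B" using phir_bounded by blast
  have i1: "integrable lborel (\<lambda>y. f y * Cps y ^ 2 * phir (0 - y))"
  proof -
    have "integrable lborel (\<lambda>y. f y * (Cps y ^ 2 * phir (0 - y)))"
    proof (rule integrable_mult_bounded_real[OF f_int, where B=B])
      show "(\<lambda>y. Cps y ^ 2 * phir (0 - y)) \<in> borel_measurable lborel" by measurable
      fix y
      have "\<bar>Cps y\<bar> ^ 2 \<le> 1" by (rule power_le_one) (auto simp: Cps_bound)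
      hence c: "\<bar>Cps y ^ 2\<bar> \<le> 1" by (simp add: power_abs)
      have B0: "0 \<le> B" using B[of 0] by linarith
      have "\<bar>Cps y ^ 2\<bar> * \<bar>phir (0 - y)\<bar> \<le> 1 * B" by (rule mult_mono[OF c B]) (auto simp: B0)
      thus "\<bar>Cps y ^ 2 * phir (0 - y)\<bar> \<le> B" by (simp add: abs_mult)
    qed
    thus ?thesis by (simp add: mult.assoc)
  qed
  have i2: "integrable lborel (\<lambda>y. f y * phir (0 - y))"
    by (rule integrable_mult_bounded_real[OF f_int _ B]) measurable
  have "Re (h 0) = (\<integral>y. f y * Cps y ^ 2 * phir (0 - y) \<partial>lborel) + (\<integral>y. f y * phir (0 - y) \<partial>lborel)"
    by (simp add: h_real Cps0)
  also have "\<dots> \<le> c1 + c2" by (intro add_mono avg_bound c1 c2 i1 i2)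
  finally show ?thesis .
qed

lemma h_nonneg:
  assumes e: "2 * d \<le> e" and x: "rad f + e \<le> norm x"
  shows "0 \<le> Re (h x)"
proof -
  have key: "0 \<le> f y * phir (x - y)" for y
  proof (cases "phir (x - y) = 0")
    case False
    hence "norm (x - y) < 2 * d" by (rule phir_supp)
    hence "rad f < norm y" using e x norm_triangle_ineq2[of x y] by linarith
    hence "0 \<le> f y" by (rule ftilde_facts(7)[OF fA])
    thus ?thesis using phir_nn by simp
  qed simp
  have "0 \<le> (\<integral>y. f y * Cps y ^ 2 * phir (x - y) \<partial>lborel)"
  proof (rule integral_nonneg_AE, rule AE_I2)
    fix y
    have eq: "f y * Cps y ^ 2 * phir (x - y) = (f y * phir (x - y)) * Cps y ^ 2" by (simp add: mult_ac)
    show "0 \<le> f y * Cps y ^ 2 * phir (x - y)" unfolding eq by (rule mult_nonneg_nonneg[OF key zero_le_power2])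
  qed
  moreover have "0 \<le> (\<integral>y. f y * phir (x - y) \<partial>lborel)"
    by (rule integral_nonneg_AE, rule AE_I2) (rule key)
  ultimately show ?thesis by (simp add: h_real)
qed

end

theorem lemma4:
  fixes f :: "real^'n::finite \<Rightarrow> real"
    and \<psi> :: "real \<Rightarrow> real^'n \<Rightarrow> real"
    and \<epsilon> :: real
  assumes f: "f \<in> A_tilde"
    and psi_nonneg: "\<And>\<delta> x. \<delta> > 0 \<Longrightarrow> \<psi> \<delta> x \<ge> 0"
    and psi_radial: "\<And>\<delta> x y. \<delta> > 0 \<Longrightarrow> norm x = norm y \<Longrightarrow> \<psi> \<delta> x = \<psi> \<delta> y"
    and psi_smooth: "\<And>\<delta>. \<delta> > 0 \<Longrightarrow> smooth_fun (\<psi> \<delta>)"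
    and psi_supp: "\<And>\<delta>. \<delta> > 0 \<Longrightarrow> closure {x. \<psi> \<delta> x \<noteq> 0} \<subseteq> ball 0 \<delta>"
    and psi_int: "\<And>\<delta>. \<delta> > 0 \<Longrightarrow> integrable lebesgue (\<psi> \<delta>)"
    and psi_L1: "\<And>\<delta>. \<delta> > 0 \<Longrightarrow> (\<integral>x. \<bar>\<psi> \<delta> x\<bar> \<partial>lebesgue) = 1"
    and eps: "\<epsilon> > 0"
  shows "\<exists>\<delta>>0.
    (let \<phi> = conv (\<lambda>x. complex_of_real (\<psi> \<delta> x)) (\<lambda>x. complex_of_real (\<psi> \<delta> x));
         g = conv (\<lambda>x. complex_of_real (f x)) \<phi>;
         h = (\<lambda>x. conv (fourier g) \<phi> x + g x * fourier \<phi> x)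
     in (\<forall>x. Im (h x) = 0) \<and> schwartz h \<and> fourier h = h \<and> Re (h 0) < 0
        \<and> rad (\<lambda>x. Re (h x)) \<le> rad f + \<epsilon>)"
proof -
  define c where "c = - f 0"
  have c: "c > 0" using ftilde_facts(5)[OF f] by (simp add: c_def)
  have "isCont f 0" using ftilde_facts(1)[OF f] by (simp add: continuous_on_eq_continuous_at)
  then obtain \<eta> where \<eta>: "\<eta> > 0" and \<eta>f: "\<And>y. dist y 0 < \<eta> \<Longrightarrow> dist (f y) (f 0) < c / 4"
    unfolding continuous_at_eps_delta using c by (metis divide_pos_pos zero_less_numeral)
  define \<delta> where "\<delta> = min (\<epsilon> / 2) (min (\<eta> / 2) (1 / 20))"
  have \<delta>0: "\<delta> > 0" using eps \<eta> by (simp add: \<delta>_def)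
  interpret M: main "\<psi> \<delta>" \<delta> f
  proof unfold_locales
    show "0 < \<delta>" by (rule \<delta>0)
    show "0 \<le> \<psi> \<delta> x" for x by (rule psi_nonneg[OF \<delta>0])
    show "\<psi> \<delta> (- x) = \<psi> \<delta> x" for x by (rule psi_radial[OF \<delta>0]) simp
    show "smooth_fun (\<psi> \<delta>)" by (rule psi_smooth[OF \<delta>0])
    show "norm x < \<delta>" if "\<psi> \<delta> x \<noteq> 0" for x
      using psi_supp[OF \<delta>0] closure_subset[of "{x. \<psi> \<delta> x \<noteq> 0}"] that by auto
    show "(\<integral>x. \<bar>\<psi> \<delta> x\<bar> \<partial>lebesgue) = 1" by (rule psi_L1[OF \<delta>0])
    show "f \<in> A_tilde" by (rule f)
  qed
  have eqphi: "conv (\<lambda>x. complex_of_real (\<psi> \<delta> x)) (\<lambda>x. complex_of_real (\<psi> \<delta> x)) = M.phi"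
    by (simp add: M.phi_def M.psc_def)
  have eqg: "conv (\<lambda>x. complex_of_real (f x)) M.phi = M.g" by (simp add: M.g_def M.F_def)
  have eqh: "(\<lambda>x. conv (fourier M.g) M.phi x + M.g x * fourier M.phi x) = M.h" by (simp add: M.h_def)
  have fb: "\<bar>f y - f 0\<bar> < c / 4" if "norm y < 2 * \<delta>" for y
  proof -
    have "2 * \<delta> \<le> \<eta>" by (simp add: \<delta>_def)
    thus ?thesis using \<eta>f[of y] that by (simp add: dist_norm)
  qed
  have c2: "f y \<le> - c / 2" if "norm y < 2 * \<delta>" for y using fb[OF that] c by (simp add: c_def)
  have c1: "f y * M.Cps y ^ 2 \<le> - c / 2" if y: "norm y < 2 * \<delta>" for y
  proof -
    have "norm (fourier M.phi y - 1) \<le> 4 * pi * \<delta> * norm y" by (rule M.fourier_phi_bound)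
    moreover have "fourier M.phi y - 1 = complex_of_real (M.Cps y ^ 2 - 1)" by (simp add: M.fourier_phi)
    ultimately have "\<bar>M.Cps y ^ 2 - 1\<bar> \<le> 4 * pi * \<delta> * norm y" by (simp only: norm_of_real)
    also have "\<dots> \<le> 4 * pi * \<delta> * (2 * \<delta>)" using y \<delta>0 by (intro mult_left_mono) auto
    also have "\<dots> \<le> 4 * 4 * (1/20) * (2 * (1/20))"
      using \<delta>0 pi_less_4 by (intro mult_mono) (auto simp: \<delta>_def)
    finally have A: "\<bar>M.Cps y ^ 2 - 1\<bar> \<le> 2 / 25" by simp
    have B: "\<bar>f y\<bar> \<le> 5 * c / 4" using fb[OF y] c by (simp add: c_def)
    have "f y * M.Cps y ^ 2 = f y + f y * (M.Cps y ^ 2 - 1)" by (simp add: algebra_simps)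
    also have "\<dots> \<le> f y + \<bar>f y\<bar> * \<bar>M.Cps y ^ 2 - 1\<bar>" by (simp add: abs_mult[symmetric])
    also have "\<dots> \<le> f y + (5 * c / 4) * (2 / 25)"
      using A B by (intro add_left_mono mult_mono) auto
    also have "\<dots> \<le> - c / 2" using fb[OF y] c by (simp add: c_def)
    finally show ?thesis .
  qed
  have h0: "Re (M.h 0) < 0"
    using M.h0_bound[OF c1 c2] c by simp
  have hrad: "rad (\<lambda>x. Re (M.h x)) \<le> rad f + \<epsilon>"
  proof -
    have mem: "rad f + \<epsilon> \<in> {r. r > 0 \<and> (\<forall>x. norm x \<ge> r \<longrightarrow> Re (M.h x) \<ge> 0)}"
      using ftilde_facts(8)[OF f] eps M.h_nonneg[of \<epsilon>] by (auto simp: \<delta>_def)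
    have "rad (\<lambda>x. Re (M.h x)) = Inf {r. r > 0 \<and> (\<forall>x. norm x \<ge> r \<longrightarrow> Re (M.h x) \<ge> 0)}"
      by (simp add: rad_def)
    also have "\<dots> \<le> rad f + \<epsilon>"
      by (rule cInf_lower[OF mem]) (rule bdd_belowI[of _ 0], auto)
    finally show ?thesis .
  qed
  have main: "(\<forall>x. Im (M.h x) = 0) \<and> schwartz M.h \<and> fourier M.h = M.h \<and> Re (M.h 0) < 0
        \<and> rad (\<lambda>x. Re (M.h x)) \<le> rad f + \<epsilon>"
    using M.h_Im M.h_schwartz M.h_fourier h0 hrad by simp
  show ?thesis
  proof (rule exI[of _ \<delta>], rule conjI[OF \<delta>0])
    show "let \<phi> = conv (\<lambda>x. complex_of_real (\<psi> \<delta> x)) (\<lambda>x. complex_of_real (\<psi> \<delta> x));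
         g = conv (\<lambda>x. complex_of_real (f x)) \<phi>;
         h = (\<lambda>x. conv (fourier g) \<phi> x + g x * fourier \<phi> x)
     in (\<forall>x. Im (h x) = 0) \<and> schwartz h \<and> fourier h = h \<and> Re (h 0) < 0
        \<and> rad (\<lambda>x. Re (h x)) \<le> rad f + \<epsilon>"
      using main unfolding Let_def eqphi eqg M.h_def by simp
  qed
qed


end
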